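(* For every pseudo-torsion class $\mathcal P\subseteq\mathcal G$, the class $\mathcal P^\perp$ is a pseudo-torsionfree class and ${}^\perp(\mathcal P^\perp)=\mathcal P$. Dually, for every pseudo-torsionfree class $\mathcal Q$, ${}^\perp\mathcal Q$ is a pseudo-torsion class and $({}^\perp\mathcal Q)^\perp=\mathcal Q$. Hence $\mathcal P\mapsto\mathcal P^\perp$ is a bijection from pseudo-torsion classes to pseudo-torsionfree classes with inverse $\mathcal Q\mapsto{}^\perp\mathcal Q$.
   Context: Let $\Lambda$ be a finite dimensional algebra over a field and $\mathrm{mod}\text-\Lambda$ the category of finitely generated right $\Lambda$-modules. Fix a torsion class $\mathcal G\subseteq\mathrm{mod}\text-\Lambda$, i.e. a class of modules closed under isomorphisms, extensions and quotients. For $B\in\mathcal G$, a subobject of $B$ is a submodule of $B$ that lies in $\mathcal G$. A subobject $A\subseteq B$ is a strict subobject if $A\cap B'\in\mathcal G$ for every subobject $B'$ of $B$. A strict quotient of $B$ is $B/A$ with $A$ a strict subobject. A short exact sequence $0\to A\to B\to C\to0$ with $A,B,C\in\mathcal G$ is strict exact (and $B$ a strict extension of $A$ by $C$) if the image of $A$ is a strict subobject of $B$. A strict morphism is a homomorphism $f:A\to B$ with $A,B\in\mathcal G$ such that $\ker f\in\mathcal G$ is a strict subobject of $A$ and $\operatorname{im} f$ is a strict subobject of $B$. A pseudo-torsion class is a nonempty class $\mathcal P\subseteq\mathcal G$ closed under strict quotients and strict extensions. A pseudo-torsionfree class is a nonempty class $\mathcal Q\subseteq\mathcal G$ closed under strict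 subobjects and strict extensions. For $\mathcal X\subseteq\mathcal G$, $\mathcal X^\perp$ is the class of $Y\in\mathcal G$ such that every strict morphism $X\to Y$ with $X\in\mathcal X$ is zero, and ${}^\perp\mathcal X$ is the class of $Y\in\mathcal G$ such that every strict morphism $Y\to X$ with $X\in\mathcal X$ is zero. *)

theory Defs
  imports Complex_Main
begin

definition fd_algebra :: "('k::field \<Rightarrow> 'l::ring_1 \<Rightarrow> 'l) \<Rightarrow> bool" where
  "fd_algebra sc \<longleftrightarrow>
     (\<exists>B. finite_dimensional_vector_space sc B) \<and>
     (\<forall>c x y. sc c (x * y) = sc c x * y \<and> sc c (x * y) = x * sc c y)"

record ('m, 'l) rmod =
  rm_carrier :: "'m set"
  rm_add :: "'m \<Rightarrow> 'm \<Rightarrow> 'm"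
  rm_zero :: "'m"
  rm_act :: "'m \<Rightarrow> 'l \<Rightarrow> 'm"

definition rmodule :: "('m, 'l::ring_1) rmod \<Rightarrow> bool" where
  "rmodule M \<longleftrightarrow>
     rm_zero M \<in> rm_carrier M \<and>
     (\<forall>x\<in>rm_carrier M. \<forall>y\<in>rm_carrier M. rm_add M x y \<in> rm_carrier M) \<and>
     (\<forall>x\<in>rm_carrier M. \<forall>a. rm_act M x a \<in> rm_carrier M) \<and>
     (\<forall>x\<in>rm_carrier M. \<forall>y\<in>rm_carrier M. \<forall>z\<in>rm_carrier M.
        rm_add M (rm_add M x y) z = rm_add M x (rm_add M y z)) \<and>
     (\<forall>x\<in>rm_carrier M. \<forall>y\<in>rm_carrier M. rm_add M x y = rm_add M y x) \<and>
     (\<forall>x\<in>rm_carrier M. rm_add M (rm_zero M) x = x) \<and>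
     (\<forall>x\<in>rm_carrier M. \<exists>y\<in>rm_carrier M. rm_add M x y = rm_zero M) \<and>
     (\<forall>x\<in>rm_carrier M. \<forall>y\<in>rm_carrier M. \<forall>a.
        rm_act M (rm_add M x y) a = rm_add M (rm_act M x a) (rm_act M y a)) \<and>
     (\<forall>x\<in>rm_carrier M. \<forall>a b. rm_act M x (a + b) = rm_add M (rm_act M x a) (rm_act M x b)) \<and>
     (\<forall>x\<in>rm_carrier M. \<forall>a b. rm_act M x (a * b) = rm_act M (rm_act M x a) b) \<and>
     (\<forall>x\<in>rm_carrier M. rm_act M x 1 = x)"

definition submodule :: "('m, 'l::ring_1) rmod \<Rightarrow> 'm set \<Rightarrow> bool" where
  "submodule M N \<longleftrightarrow>
     N \<subseteq> rm_carrier M \<and> rm_zero M \<in> N \<and>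
     (\<forall>x\<in>N. \<forall>y\<in>N. rm_add M x y \<in> N) \<and>
     (\<forall>x\<in>N. \<forall>a. rm_act M x a \<in> N)"

definition restr :: "('m, 'l) rmod \<Rightarrow> 'm set \<Rightarrow> ('m, 'l) rmod" where
  "restr M N = M\<lparr>rm_carrier := N\<rparr>"

definition fin_gen :: "('m, 'l::ring_1) rmod \<Rightarrow> bool" where
  "fin_gen M \<longleftrightarrow> (\<exists>S. finite S \<and> S \<subseteq> rm_carrier M \<and>
     (\<forall>N. submodule M N \<and> S \<subseteq> N \<longrightarrow> rm_carrier M \<subseteq> N))"

definition rhom :: "('m, 'l) rmod \<Rightarrow> ('n, 'l) rmod \<Rightarrow> ('m \<Rightarrow> 'n) \<Rightarrow> bool" where
  "rhom M N f \<longleftrightarrow>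
     (\<forall>x\<in>rm_carrier M. f x \<in> rm_carrier N) \<and>
     (\<forall>x\<in>rm_carrier M. \<forall>y\<in>rm_carrier M. f (rm_add M x y) = rm_add N (f x) (f y)) \<and>
     (\<forall>x\<in>rm_carrier M. \<forall>a. f (rm_act M x a) = rm_act N (f x) a)"

definition kern :: "('m, 'l) rmod \<Rightarrow> ('n, 'l) rmod \<Rightarrow> ('m \<Rightarrow> 'n) \<Rightarrow> 'm set" where
  "kern M N f = {x \<in> rm_carrier M. f x = rm_zero N}"

definition short_exact ::
  "('m, 'l) rmod \<Rightarrow> ('m \<Rightarrow> 'm) \<Rightarrow> ('m, 'l) rmod \<Rightarrow> ('m \<Rightarrow> 'm) \<Rightarrow> ('m, 'l) rmod \<Rightarrow> bool" where
  "short_exact A f B g C \<longleftrightarrow>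
     rhom A B f \<and> rhom B C g \<and> inj_on f (rm_carrier A) \<and>
     g ` rm_carrier B = rm_carrier C \<and> f ` rm_carrier A = kern B C g"

text \<open>Modules are represented on the carrier type 'l list, which is large enough
that every finitely generated right Lambda-module has an isomorphic copy.\<close>
type_synonym 'l modl = "('l list, 'l) rmod"

definition modL :: "'l::ring_1 modl set" where
  "modL = {M. rmodule M \<and> fin_gen M}"

definition torsion_class :: "'l::ring_1 modl set \<Rightarrow> bool" where
  "torsion_class G \<longleftrightarrow>
     G \<subseteq> modL \<and>
     (\<forall>B C f. B \<in> G \<and> C \<in> modL \<and> rhom B C f \<and> bij_betw f (rm_carrier B) (rm_carrier C)
        \<longrightarrow> C \<in> G) \<and>
     (\<forall>B C g. B \<in> G \<and> C \<in> modL \<and> rhom B C g \<and> g ` rm_carrier B = rm_carrier C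
        \<longrightarrow> C \<in> G) \<and>
     (\<forall>A f B g C. A \<in> G \<and> C \<in> G \<and> B \<in> modL \<and> short_exact A f B g C \<longrightarrow> B \<in> G)"

definition subobj :: "'l::ring_1 modl set \<Rightarrow> 'l modl \<Rightarrow> 'l list set \<Rightarrow> bool" where
  "subobj G B N \<longleftrightarrow> submodule B N \<and> restr B N \<in> G"

definition strict_sub :: "'l::ring_1 modl set \<Rightarrow> 'l modl \<Rightarrow> 'l list set \<Rightarrow> bool" where
  "strict_sub G B A \<longleftrightarrow> subobj G B A \<and> (\<forall>B'. subobj G B B' \<longrightarrow> restr B (A \<inter> B') \<in> G)"

text \<open>C is (isomorphic to) a strict quotient B/A: there is an epimorphism B \<rightarrow> C
whose kernel is a strict subobject of B.\<close>
definition strict_quot :: "'l::ring_1 modl set \<Rightarrow> 'l modl \<Rightarrow> 'l modl \<Rightarrow> bool" where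
  "strict_quot G B C \<longleftrightarrow> B \<in> G \<and> C \<in> G \<and>
     (\<exists>g. rhom B C g \<and> g ` rm_carrier B = rm_carrier C \<and> strict_sub G B (kern B C g))"

definition strict_exact ::
  "'l::ring_1 modl set \<Rightarrow> 'l modl \<Rightarrow> ('l list \<Rightarrow> 'l list) \<Rightarrow> 'l modl
     \<Rightarrow> ('l list \<Rightarrow> 'l list) \<Rightarrow> 'l modl \<Rightarrow> bool" where
  "strict_exact G A f B g C \<longleftrightarrow> A \<in> G \<and> B \<in> G \<and> C \<in> G \<and>
     short_exact A f B g C \<and> strict_sub G B (f ` rm_carrier A)"

definition strict_mor ::
  "'l::ring_1 modl set \<Rightarrow> 'l modl \<Rightarrow> 'l modl \<Rightarrow> ('l list \<Rightarrow> 'l list) \<Rightarrow> bool" where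
  "strict_mor G A B f \<longleftrightarrow> A \<in> G \<and> B \<in> G \<and> rhom A B f \<and>
     strict_sub G A (kern A B f) \<and> strict_sub G B (f ` rm_carrier A)"

definition pseudo_torsion :: "'l::ring_1 modl set \<Rightarrow> 'l modl set \<Rightarrow> bool" where
  "pseudo_torsion G P \<longleftrightarrow> P \<noteq> {} \<and> P \<subseteq> G \<and>
     (\<forall>B C. B \<in> P \<and> strict_quot G B C \<longrightarrow> C \<in> P) \<and>
     (\<forall>A f B g C. A \<in> P \<and> C \<in> P \<and> strict_exact G A f B g C \<longrightarrow> B \<in> P)"

definition pseudo_torsionfree :: "'l::ring_1 modl set \<Rightarrow> 'l modl set \<Rightarrow> bool" where
  "pseudo_torsionfree G Q \<longleftrightarrow> Q \<noteq> {} \<and> Q \<subseteq> G \<and>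
     (\<forall>B A. B \<in> Q \<and> strict_sub G B A \<longrightarrow> restr B A \<in> Q) \<and>
     (\<forall>A f B g C. A \<in> Q \<and> C \<in> Q \<and> strict_exact G A f B g C \<longrightarrow> B \<in> Q)"

definition rperp :: "'l::ring_1 modl set \<Rightarrow> 'l modl set \<Rightarrow> 'l modl set" where
  "rperp G X = {Y \<in> G. \<forall>X0\<in>X. \<forall>f. strict_mor G X0 Y f \<longrightarrow>
                   (\<forall>x\<in>rm_carrier X0. f x = rm_zero Y)}"

definition lperp :: "'l::ring_1 modl set \<Rightarrow> 'l modl set \<Rightarrow> 'l modl set" where
  "lperp G X = {Y \<in> G. \<forall>X0\<in>X. \<forall>f. strict_mor G Y X0 f \<longrightarrow>
                   (\<forall>y\<in>rm_carrier Y. f y = rm_zero X0)}"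

end

theory Submission
  imports Defs "HOL-Library.Function_Algebras"
begin


definition mneg :: "('m, 'l::ring_1) rmod \<Rightarrow> 'm \<Rightarrow> 'm" where "mneg M x = rm_act M x (-1)"

context
  fixes M :: "('m, 'l::ring_1) rmod"
  assumes M: "rmodule M"
begin

lemma add_closed[simp]: "x \<in> rm_carrier M \<Longrightarrow> y \<in> rm_carrier M \<Longrightarrow> rm_add M x y \<in> rm_carrier M"
  using M unfolding rmodule_def by (elim conjE) (blast | simp)
lemma act_closed[simp]: "x \<in> rm_carrier M \<Longrightarrow> rm_act M x a \<in> rm_carrier M"
  using M unfolding rmodule_def by (elim conjE) (blast | simp)
lemma zero_closed[simp]: "rm_zero M \<in> rm_carrier M"
  using M unfolding rmodule_def by (elim conjE) (blast | simp)
lemma add_assoc: "x \<in> rm_carrier M \<Longrightarrow> y \<in> rm_carrier M \<Longrightarrow> z \<in> rm_carrier M \<Longrightarrow>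
  rm_add M (rm_add M x y) z = rm_add M x (rm_add M y z)"
  using M unfolding rmodule_def by (elim conjE) (blast | simp)
lemma add_comm: "x \<in> rm_carrier M \<Longrightarrow> y \<in> rm_carrier M \<Longrightarrow> rm_add M x y = rm_add M y x"
  using M unfolding rmodule_def by (elim conjE) (blast | simp)
lemma lzero[simp]: "x \<in> rm_carrier M \<Longrightarrow> rm_add M (rm_zero M) x = x"
  using M unfolding rmodule_def by (elim conjE) (blast | simp)
lemma rzero[simp]: "x \<in> rm_carrier M \<Longrightarrow> rm_add M x (rm_zero M) = x"
  using add_comm lzero by simp
lemma ex_inv: "x \<in> rm_carrier M \<Longrightarrow> \<exists>y\<in>rm_carrier M. rm_add M x y = rm_zero M"
  using M unfolding rmodule_def by (elim conjE) (blast | simp)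
lemma act_distl: "x \<in> rm_carrier M \<Longrightarrow> y \<in> rm_carrier M \<Longrightarrow>
  rm_act M (rm_add M x y) a = rm_add M (rm_act M x a) (rm_act M y a)"
  using M unfolding rmodule_def by (elim conjE) (blast | simp)
lemma act_distr: "x \<in> rm_carrier M \<Longrightarrow> rm_act M x (a + b) = rm_add M (rm_act M x a) (rm_act M x b)"
  using M unfolding rmodule_def by (elim conjE) (blast | simp)
lemma act_act: "x \<in> rm_carrier M \<Longrightarrow> rm_act M x (a * b) = rm_act M (rm_act M x a) b"
  using M unfolding rmodule_def by (elim conjE) (blast | simp)
lemma act_one[simp]: "x \<in> rm_carrier M \<Longrightarrow> rm_act M x 1 = x"
  using M unfolding rmodule_def by (elim conjE) (blast | simp)

lemma cancel: assumes "x \<in> rm_carrier M" "y \<in> rm_carrier M" "z \<in> rm_carrier M"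
  "rm_add M x y = rm_add M x z" shows "y = z"
proof -
  obtain x' where x': "x' \<in> rm_carrier M" "rm_add M x x' = rm_zero M" using ex_inv assms by blast
  have e: "rm_add M x' x = rm_zero M" using x' add_comm assms by simp
  have "rm_add M x' (rm_add M x y) = rm_add M x' (rm_add M x z)" using assms by simp
  then have "rm_add M (rm_add M x' x) y = rm_add M (rm_add M x' x) z"
    using add_assoc assms x' by simp
  then show ?thesis using e assms by simp
qed

lemma idem_zero: "x \<in> rm_carrier M \<Longrightarrow> rm_add M x x = x \<Longrightarrow> x = rm_zero M"
  using cancel[of x x "rm_zero M"] by simp

lemma act_zero_r[simp]: "x \<in> rm_carrier M \<Longrightarrow> rm_act M x 0 = rm_zero M"
  using act_distr[of x 0 0] idem_zero[of "rm_act M x 0"] by simp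

lemma act_zero_l[simp]: "rm_act M (rm_zero M) a = rm_zero M"
  using act_distl[of "rm_zero M" "rm_zero M" a] idem_zero[of "rm_act M (rm_zero M) a"] by simp


lemma neg_closed[simp]: "x \<in> rm_carrier M \<Longrightarrow> mneg M x \<in> rm_carrier M"
  unfolding mneg_def by simp

lemma add_neg[simp]: "x \<in> rm_carrier M \<Longrightarrow> rm_add M x (mneg M x) = rm_zero M"
  unfolding mneg_def using act_distr[of x 1 "-1"] by simp

lemma add_neg_eq: assumes "x \<in> rm_carrier M" "y \<in> rm_carrier M" "rm_add M x (mneg M y) = rm_zero M"
  shows "x = y"
proof -
  have "rm_add M (mneg M y) x = rm_add M (mneg M y) y" using assms add_comm by simp
  then show ?thesis using cancel assms by (meson neg_closed)
qed

lemma add_left_eq: assumes "x \<in> rm_carrier M" "y \<in> rm_carrier M"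
  shows "rm_add M y (rm_add M x (mneg M y)) = x"
  using assms add_assoc add_comm
  by (metis add_neg neg_closed rzero)

end

lemma submodule_carrier: "rmodule M \<Longrightarrow> submodule M (rm_carrier M)"
  unfolding submodule_def by auto

lemma submodule_zero: "rmodule M \<Longrightarrow> submodule M {rm_zero M}"
  unfolding submodule_def by auto

lemma submodule_Int: "submodule M A \<Longrightarrow> submodule M B \<Longrightarrow> submodule M (A \<inter> B)"
  unfolding submodule_def by auto

lemma submodule_neg: "rmodule M \<Longrightarrow> submodule M N \<Longrightarrow> x \<in> N \<Longrightarrow> mneg M x \<in> N"
  unfolding submodule_def mneg_def by auto

lemma restr_simps[simp]:
  "rm_carrier (restr M N) = N" "rm_add (restr M N) = rm_add M" "rm_zero (restr M N) = rm_zero M"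
  "rm_act (restr M N) = rm_act M" "restr (restr M A) B = restr M B"
  unfolding restr_def by auto

lemma restr_carrier[simp]: "restr M (rm_carrier M) = M"
  unfolding restr_def by auto

lemma mneg_restr[simp]: "mneg (restr M N) = mneg M"
  unfolding mneg_def[abs_def] by simp

lemma rmodule_restr: assumes "rmodule M" "submodule M N" shows "rmodule (restr M N)"
proof -
  have sub: "N \<subseteq> rm_carrier M" using assms(2) unfolding submodule_def by auto
  have inv: "\<forall>x\<in>N. \<exists>y\<in>N. rm_add M x y = rm_zero M"
    using submodule_neg[OF assms] add_neg[OF assms(1)] sub by blast
  have cl: "rm_zero M \<in> N" "\<forall>x\<in>N. \<forall>y\<in>N. rm_add M x y \<in> N" "\<forall>x\<in>N. \<forall>a. rm_act M x a \<in> N"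
    using assms(2) unfolding submodule_def by auto
  have ax: "\<forall>x\<in>N. \<forall>y\<in>N. \<forall>z\<in>N. rm_add M (rm_add M x y) z = rm_add M x (rm_add M y z)"
     "\<forall>x\<in>N. \<forall>y\<in>N. rm_add M x y = rm_add M y x"
     "\<forall>x\<in>N. rm_add M (rm_zero M) x = x"
     "\<forall>x\<in>N. \<forall>y\<in>N. \<forall>a. rm_act M (rm_add M x y) a = rm_add M (rm_act M x a) (rm_act M y a)"
     "\<forall>x\<in>N. \<forall>a b. rm_act M x (a + b) = rm_add M (rm_act M x a) (rm_act M x b)"
     "\<forall>x\<in>N. \<forall>a b. rm_act M x (a * b) = rm_act M (rm_act M x a) b"
     "\<forall>x\<in>N. rm_act M x 1 = x"
    using sub add_assoc[OF assms(1)] add_comm[OF assms(1)] lzero[OF assms(1)] act_distl[OF assms(1)]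
      act_distr[OF assms(1)] act_act[OF assms(1)] act_one[OF assms(1)] by (meson subsetD)+
  show ?thesis unfolding rmodule_def restr_simps using inv cl ax by blast
qed

lemma submodule_restr_iff: "A \<subseteq> rm_carrier M \<Longrightarrow> submodule (restr M A) B \<longleftrightarrow> submodule M B \<and> B \<subseteq> A"
  unfolding submodule_def by auto

lemma rhom_zero: assumes "rmodule M" "rmodule N" "rhom M N f" shows "f (rm_zero M) = rm_zero N"
proof -
  have z: "rm_zero M \<in> rm_carrier M" using assms(1) by simp
  have "f (rm_add M (rm_zero M) (rm_zero M)) = rm_add N (f (rm_zero M)) (f (rm_zero M))"
    using assms(3) z unfolding rhom_def by blast
  then have "f (rm_zero M) = rm_add N (f (rm_zero M)) (f (rm_zero M))"
    using lzero[OF assms(1) z] by simp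
  moreover have "f (rm_zero M) \<in> rm_carrier N" using assms(3) z unfolding rhom_def by blast
  ultimately show ?thesis using idem_zero[OF assms(2)] by metis
qed

lemma rhom_closed: "rhom M N f \<Longrightarrow> x \<in> rm_carrier M \<Longrightarrow> f x \<in> rm_carrier N"
  unfolding rhom_def by blast
lemma rhom_add: "rhom M N f \<Longrightarrow> x \<in> rm_carrier M \<Longrightarrow> y \<in> rm_carrier M \<Longrightarrow> f (rm_add M x y) = rm_add N (f x) (f y)"
  unfolding rhom_def by blast
lemma rhom_act: "rhom M N f \<Longrightarrow> x \<in> rm_carrier M \<Longrightarrow> f (rm_act M x a) = rm_act N (f x) a"
  unfolding rhom_def by blast
lemma rhom_neg: "rhom M N f \<Longrightarrow> x \<in> rm_carrier M \<Longrightarrow> f (mneg M x) = mneg N (f x)"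
  unfolding rhom_def mneg_def by blast

lemma rhom_comp: "rhom M N f \<Longrightarrow> rhom N Z g \<Longrightarrow> rhom M Z (g \<circ> f)"
  unfolding rhom_def by auto

lemma rhom_restr_dom: "rhom M N f \<Longrightarrow> A \<subseteq> rm_carrier M \<Longrightarrow> rhom (restr M A) N f"
  unfolding rhom_def by (simp add: subset_iff)

lemma rhom_restr_cod: "rhom M N f \<Longrightarrow> f ` rm_carrier M \<subseteq> B \<Longrightarrow> rhom M (restr N B) f"
  unfolding rhom_def by auto

lemma rhom_restr_cod_D: "rhom M (restr N B) f \<Longrightarrow> B \<subseteq> rm_carrier N \<Longrightarrow> rhom M N f"
  unfolding rhom_def by auto

lemma rhom_restr_cod_D2: "rhom M (restr N B) f \<Longrightarrow> f ` rm_carrier M \<subseteq> B"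
  unfolding rhom_def by auto

lemma rhom_id: "submodule M A \<Longrightarrow> rhom (restr M A) M id"
  unfolding rhom_def submodule_def by auto

lemma submodule_image: assumes "rmodule M" "rmodule N" "rhom M N f" "submodule M A"
  shows "submodule N (f ` A)"
  unfolding submodule_def
proof (intro conjI)
  have A: "A \<subseteq> rm_carrier M" using assms(4) unfolding submodule_def by blast
  show "f ` A \<subseteq> rm_carrier N" using A rhom_closed[OF assms(3)] by blast
  have "rm_zero M \<in> A" using assms(4) unfolding submodule_def by blast
  then have "f (rm_zero M) \<in> f ` A" by (rule imageI)
  then show "rm_zero N \<in> f ` A" using rhom_zero[OF assms(1-3)] by simp
  show "\<forall>x\<in>f ` A. \<forall>y\<in>f ` A. rm_add N x y \<in> f ` A"
  proof (intro ballI)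
    fix x y assume "x \<in> f ` A" "y \<in> f ` A"
    then obtain a b where ab: "a \<in> A" "b \<in> A" "x = f a" "y = f b" by blast
    have "rm_add M a b \<in> A" using assms(4) ab unfolding submodule_def by blast
    then have "f (rm_add M a b) \<in> f ` A" by (rule imageI)
    moreover have "f (rm_add M a b) = rm_add N x y" using rhom_add[OF assms(3)] ab A by blast
    ultimately show "rm_add N x y \<in> f ` A" by simp
  qed
  show "\<forall>x\<in>f ` A. \<forall>a. rm_act N x a \<in> f ` A"
  proof (intro ballI allI)
    fix x a assume "x \<in> f ` A"
    then obtain b where ab: "b \<in> A" "x = f b" by blast
    have "rm_act M b a \<in> A" using assms(4) ab unfolding submodule_def by blast
    then have "f (rm_act M b a) \<in> f ` A" by (rule imageI)
    moreover have "f (rm_act M b a) = rm_act N x a" using rhom_act[OF assms(3)] ab A by blast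
    ultimately show "rm_act N x a \<in> f ` A" by simp
  qed
qed

lemma submodule_preimage: assumes "rmodule M" "rmodule N" "rhom M N f" "submodule N B"
  shows "submodule M {x \<in> rm_carrier M. f x \<in> B}"
  unfolding submodule_def
proof (intro conjI ballI allI)
  show "{x \<in> rm_carrier M. f x \<in> B} \<subseteq> rm_carrier M" by blast
  have "f (rm_zero M) \<in> B" using rhom_zero[OF assms(1-3)] assms(4) unfolding submodule_def by simp
  then show "rm_zero M \<in> {x \<in> rm_carrier M. f x \<in> B}" using zero_closed[OF assms(1)] by blast
next
  fix x y assume "x \<in> {x \<in> rm_carrier M. f x \<in> B}" "y \<in> {x \<in> rm_carrier M. f x \<in> B}"
  then have xy: "x \<in> rm_carrier M" "y \<in> rm_carrier M" "f x \<in> B" "f y \<in> B" by auto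
  have "f (rm_add M x y) = rm_add N (f x) (f y)" using rhom_add[OF assms(3) xy(1,2)] .
  moreover have "rm_add N (f x) (f y) \<in> B" using assms(4) xy unfolding submodule_def by blast
  ultimately show "rm_add M x y \<in> {x \<in> rm_carrier M. f x \<in> B}" using add_closed[OF assms(1) xy(1,2)] by simp
next
  fix x a assume "x \<in> {x \<in> rm_carrier M. f x \<in> B}"
  then have xy: "x \<in> rm_carrier M" "f x \<in> B" by auto
  have "f (rm_act M x a) = rm_act N (f x) a" using rhom_act[OF assms(3) xy(1)] .
  moreover have "rm_act N (f x) a \<in> B" using assms(4) xy unfolding submodule_def by blast
  ultimately show "rm_act M x a \<in> {x \<in> rm_carrier M. f x \<in> B}" using act_closed[OF assms(1) xy(1)] by simp
qed

lemma submodule_kern: assumes "rmodule M" "rmodule N" "rhom M N f"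
  shows "submodule M (kern M N f)"
  using submodule_preimage[OF assms submodule_zero[OF assms(2)]] unfolding kern_def by simp

lemma kern_restr[simp]: "kern M (restr N B) f = kern M N f"
  unfolding kern_def by simp

lemma kern_restr_dom: "A \<subseteq> rm_carrier M \<Longrightarrow> kern (restr M A) N f = A \<inter> kern M N f"
  unfolding kern_def by auto

lemma rhom_add_neg: assumes "rmodule M" "rhom M N f" "x \<in> rm_carrier M" "y \<in> rm_carrier M"
  shows "f (rm_add M x (mneg M y)) = rm_add N (f x) (mneg N (f y))"
proof -
  have "mneg M y \<in> rm_carrier M" using neg_closed[OF assms(1) assms(4)] .
  then have "f (rm_add M x (mneg M y)) = rm_add N (f x) (f (mneg M y))" using rhom_add[OF assms(2) assms(3)] by blast
  also have "f (mneg M y) = mneg N (f y)" using rhom_neg[OF assms(2) assms(4)] .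
  finally show ?thesis .
qed

lemma rhom_eq: assumes "rmodule M" "rmodule N" "rhom M N f" "x \<in> rm_carrier M" "y \<in> rm_carrier M"
  "rm_add M x (mneg M y) \<in> kern M N f" shows "f x = f y"
proof -
  have "f (rm_add M x (mneg M y)) = rm_zero N" using assms(6) unfolding kern_def by blast
  then have "rm_add N (f x) (mneg N (f y)) = rm_zero N" using rhom_add_neg[OF assms(1,3,4,5)] by simp
  then show ?thesis using add_neg_eq[OF assms(2)] rhom_closed[OF assms(3) assms(4)] rhom_closed[OF assms(3) assms(5)] by blast
qed

lemma rhom_eq_kern: assumes "rmodule M" "rmodule N" "rhom M N f" "x \<in> rm_carrier M" "y \<in> rm_carrier M"
  "f x = f y" shows "rm_add M x (mneg M y) \<in> kern M N f"
proof -
  have "f (rm_add M x (mneg M y)) = rm_add N (f x) (mneg N (f y))" using rhom_add_neg[OF assms(1,3,4,5)] .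
  also have "\<dots> = rm_zero N" using assms(6) add_neg[OF assms(2) rhom_closed[OF assms(3) assms(5)]] by simp
  finally have "f (rm_add M x (mneg M y)) = rm_zero N" .
  moreover have "rm_add M x (mneg M y) \<in> rm_carrier M" using add_closed[OF assms(1) assms(4) neg_closed[OF assms(1) assms(5)]] .
  ultimately show ?thesis unfolding kern_def by blast
qed

lemma inj_kern: assumes "rmodule M" "rmodule N" "rhom M N f" "kern M N f \<subseteq> {rm_zero M}"
  shows "inj_on f (rm_carrier M)"
proof
  fix x y assume xy: "x \<in> rm_carrier M" "y \<in> rm_carrier M" "f x = f y"
  then have "rm_add M x (mneg M y) \<in> kern M N f" by (rule rhom_eq_kern[OF assms(1-3)])
  then have "rm_add M x (mneg M y) = rm_zero M" using assms(4) by blast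
  then show "x = y" using add_neg_eq[OF assms(1)] xy by blast
qed

lemma kern_inj: assumes "rmodule M" "rmodule N" "rhom M N f" "inj_on f (rm_carrier M)"
  shows "kern M N f = {rm_zero M}"
proof -
  have z: "f (rm_zero M) = rm_zero N" by (rule rhom_zero[OF assms(1-3)])
  have "x = rm_zero M" if "x \<in> kern M N f" for x
  proof -
    have "x \<in> rm_carrier M" "f x = f (rm_zero M)" using that z unfolding kern_def by auto
    then show ?thesis using inj_onD[OF assms(4)] zero_closed[OF assms(1)] by blast
  qed
  moreover have "rm_zero M \<in> kern M N f" using z zero_closed[OF assms(1)] unfolding kern_def by blast
  ultimately show ?thesis by blast
qed


lemma add_swap4: assumes "rmodule M" "a \<in> rm_carrier M" "b \<in> rm_carrier M" "c \<in> rm_carrier M" "d \<in> rm_carrier M"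
  shows "rm_add M (rm_add M a b) (rm_add M c d) = rm_add M (rm_add M a c) (rm_add M b d)"
proof -
  have "rm_add M (rm_add M a b) (rm_add M c d) = rm_add M a (rm_add M b (rm_add M c d))"
    using add_assoc[OF assms(1) assms(2,3)] assms by simp
  also have "rm_add M b (rm_add M c d) = rm_add M (rm_add M b c) d" using add_assoc[OF assms(1) assms(3,4,5)] by simp
  also have "rm_add M b c = rm_add M c b" using add_comm[OF assms(1) assms(3,4)] .
  also have "rm_add M (rm_add M c b) d = rm_add M c (rm_add M b d)" using add_assoc[OF assms(1) assms(4,3,5)] .
  also have "rm_add M a (rm_add M c (rm_add M b d)) = rm_add M (rm_add M a c) (rm_add M b d)"
    using add_assoc[OF assms(1) assms(2,4)] assms by simp
  finally show ?thesis .
qed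

section \<open>Quotient modules\<close>

definition qrel :: "('m, 'l::ring_1) rmod \<Rightarrow> 'm set \<Rightarrow> 'm \<Rightarrow> 'm \<Rightarrow> bool" where
  "qrel M N x y \<longleftrightarrow> x \<in> rm_carrier M \<and> y \<in> rm_carrier M \<and> (\<exists>n\<in>N. x = rm_add M y n)"

definition qrep :: "('m, 'l::ring_1) rmod \<Rightarrow> 'm set \<Rightarrow> 'm \<Rightarrow> 'm" where
  "qrep M N x = (SOME y. qrel M N x y)"

definition quot :: "('m, 'l::ring_1) rmod \<Rightarrow> 'm set \<Rightarrow> ('m, 'l) rmod" where
  "quot M N = \<lparr>rm_carrier = qrep M N ` rm_carrier M, rm_add = \<lambda>a b. qrep M N (rm_add M a b),
     rm_zero = qrep M N (rm_zero M), rm_act = \<lambda>a r. qrep M N (rm_act M a r)\<rparr>"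

lemma quot_simps[simp]: "rm_carrier (quot M N) = qrep M N ` rm_carrier M"
  "rm_add (quot M N) = (\<lambda>a b. qrep M N (rm_add M a b))"
  "rm_zero (quot M N) = qrep M N (rm_zero M)"
  "rm_act (quot M N) = (\<lambda>a r. qrep M N (rm_act M a r))"
  unfolding quot_def by simp_all

context
  fixes M :: "('m, 'l::ring_1) rmod" and N
  assumes M: "rmodule M" and N: "submodule M N"
begin

lemma NC: "N \<subseteq> rm_carrier M" using N unfolding submodule_def by blast
lemma N0: "rm_zero M \<in> N" using N unfolding submodule_def by blast
lemma Nadd: "x \<in> N \<Longrightarrow> y \<in> N \<Longrightarrow> rm_add M x y \<in> N" using N unfolding submodule_def by blast
lemma Nact: "x \<in> N \<Longrightarrow> rm_act M x a \<in> N" using N unfolding submodule_def by blast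

lemma qrel_refl: "x \<in> rm_carrier M \<Longrightarrow> qrel M N x x"
  unfolding qrel_def using N0 rzero[OF M] by metis

lemma qrel_sym: assumes "qrel M N x y" shows "qrel M N y x"
proof -
  obtain n where n: "n \<in> N" "x = rm_add M y n" "x \<in> rm_carrier M" "y \<in> rm_carrier M"
    using assms unfolding qrel_def by blast
  have nC: "n \<in> rm_carrier M" using n NC by blast
  have "rm_add M x (mneg M n) = rm_add M y (rm_add M n (mneg M n))"
    using n(2) add_assoc[OF M n(4) nC neg_closed[OF M nC]] by simp
  also have "\<dots> = y" using add_neg[OF M nC] rzero[OF M n(4)] by simp
  finally have "y = rm_add M x (mneg M n)" by simp
  moreover have "mneg M n \<in> N" using submodule_neg[OF M N n(1)] .
  ultimately show ?thesis unfolding qrel_def using n by blast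
qed

lemma qrel_trans: assumes "qrel M N x y" "qrel M N y z" shows "qrel M N x z"
proof -
  obtain n where n: "n \<in> N" "x = rm_add M y n" "x \<in> rm_carrier M" "y \<in> rm_carrier M"
    using assms unfolding qrel_def by blast
  obtain m where m: "m \<in> N" "y = rm_add M z m" "z \<in> rm_carrier M"
    using assms unfolding qrel_def by blast
  have "x = rm_add M z (rm_add M m n)" using n m add_assoc[OF M, of z m n] NC by blast
  then show ?thesis unfolding qrel_def using n m Nadd by blast
qed

lemma qrel_add: assumes "qrel M N x x'" "qrel M N y y'" shows "qrel M N (rm_add M x y) (rm_add M x' y')"
proof -
  obtain n where n: "n \<in> N" "x = rm_add M x' n" "x \<in> rm_carrier M" "x' \<in> rm_carrier M"
    using assms unfolding qrel_def by blast
  obtain m where m: "m \<in> N" "y = rm_add M y' m" "y \<in> rm_carrier M" "y' \<in> rm_carrier M"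
    using assms unfolding qrel_def by blast
  have "rm_add M x y = rm_add M (rm_add M x' y') (rm_add M n m)"
    using n m add_swap4[OF M, of x' n y' m] NC by blast
  then show ?thesis unfolding qrel_def using n m Nadd add_closed[OF M] by blast
qed

lemma qrel_act: assumes "qrel M N x x'" shows "qrel M N (rm_act M x a) (rm_act M x' a)"
proof -
  obtain n where n: "n \<in> N" "x = rm_add M x' n" "x \<in> rm_carrier M" "x' \<in> rm_carrier M"
    using assms unfolding qrel_def by blast
  have "rm_act M x a = rm_add M (rm_act M x' a) (rm_act M n a)"
    using n act_distl[OF M, of x' n a] NC by blast
  then show ?thesis unfolding qrel_def using n Nact act_closed[OF M] by blast
qed

lemma qrel_rep: assumes "x \<in> rm_carrier M" shows "qrel M N x (qrep M N x)"
  unfolding qrep_def using qrel_refl[OF assms] by (rule someI)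

lemma qrep_closed: "x \<in> rm_carrier M \<Longrightarrow> qrep M N x \<in> rm_carrier M"
  using qrel_rep unfolding qrel_def by blast

lemma qrep_eqI: assumes "qrel M N x y" shows "qrep M N x = qrep M N y"
proof -
  have "qrel M N x = qrel M N y"
  proof
    fix z show "qrel M N x z = qrel M N y z"
      using assms qrel_trans qrel_sym by blast
  qed
  then show ?thesis unfolding qrep_def by simp
qed

lemma qrep_eqD: assumes "x \<in> rm_carrier M" "y \<in> rm_carrier M" "qrep M N x = qrep M N y"
  shows "qrel M N x y"
  using qrel_rep[OF assms(1)] qrel_rep[OF assms(2)] assms(3) qrel_sym qrel_trans by metis

lemma qrep_qrep: "x \<in> rm_carrier M \<Longrightarrow> qrep M N (qrep M N x) = qrep M N x"
  using qrep_eqI qrel_rep qrel_sym by metis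

lemma qrep_add1: "x \<in> rm_carrier M \<Longrightarrow> y \<in> rm_carrier M \<Longrightarrow>
   qrep M N (rm_add M (qrep M N x) y) = qrep M N (rm_add M x y)"
  by (intro qrep_eqI qrel_add qrel_sym[OF qrel_rep] qrel_refl)

lemma qrep_add2: "x \<in> rm_carrier M \<Longrightarrow> y \<in> rm_carrier M \<Longrightarrow>
   qrep M N (rm_add M x (qrep M N y)) = qrep M N (rm_add M x y)"
  by (intro qrep_eqI qrel_add qrel_sym[OF qrel_rep] qrel_refl)

lemma qrep_add12: "x \<in> rm_carrier M \<Longrightarrow> y \<in> rm_carrier M \<Longrightarrow>
   qrep M N (rm_add M (qrep M N x) (qrep M N y)) = qrep M N (rm_add M x y)"
  by (intro qrep_eqI qrel_add qrel_sym[OF qrel_rep])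

lemma qrep_act1: "x \<in> rm_carrier M \<Longrightarrow>
   qrep M N (rm_act M (qrep M N x) a) = qrep M N (rm_act M x a)"
  by (intro qrep_eqI qrel_act qrel_sym[OF qrel_rep])

lemma qrep_zero_iff: "x \<in> rm_carrier M \<Longrightarrow> qrep M N x = qrep M N (rm_zero M) \<longleftrightarrow> x \<in> N"
proof
  assume x: "x \<in> rm_carrier M" "qrep M N x = qrep M N (rm_zero M)"
  then have "qrel M N x (rm_zero M)" using qrep_eqD zero_closed[OF M] by blast
  then show "x \<in> N" unfolding qrel_def using lzero[OF M] NC by auto
next
  assume "x \<in> rm_carrier M" "x \<in> N"
  moreover have "x = rm_add M (rm_zero M) x" using lzero[OF M] \<open>x \<in> rm_carrier M\<close> by simp
  ultimately have "\<exists>n\<in>N. x = rm_add M (rm_zero M) n" by (intro bexI[of _ x])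
  then have "qrel M N x (rm_zero M)" unfolding qrel_def using zero_closed[OF M] \<open>x \<in> rm_carrier M\<close> by blast
  then show "qrep M N x = qrep M N (rm_zero M)" by (rule qrep_eqI)
qed

lemma imgC: "x \<in> qrep M N ` rm_carrier M \<Longrightarrow> x \<in> rm_carrier M"
  using qrep_closed by blast

lemma imgr: "x \<in> qrep M N ` rm_carrier M \<Longrightarrow> qrep M N x = x"
proof -
  assume "x \<in> qrep M N ` rm_carrier M"
  then obtain y where "y \<in> rm_carrier M" "x = qrep M N y" by blast
  then show ?thesis using qrep_qrep by simp
qed

lemma rmodule_quot: "rmodule (quot M N)"
proof -
  let ?r = "qrep M N"
  let ?C = "rm_carrier M"
  show ?thesis unfolding rmodule_def quot_simps
  proof (intro conjI ballI allI)
    show "?r (rm_zero M) \<in> ?r ` ?C" using zero_closed[OF M] by (rule imageI)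
  next
    fix x y assume "x \<in> ?r ` ?C" "y \<in> ?r ` ?C"
    then have "rm_add M x y \<in> ?C" using imgC add_closed[OF M] by blast
    then show "?r (rm_add M x y) \<in> ?r ` ?C" by (rule imageI)
  next
    fix x a assume "x \<in> ?r ` ?C"
    then have "rm_act M x a \<in> ?C" using imgC act_closed[OF M] by blast
    then show "?r (rm_act M x a) \<in> ?r ` ?C" by (rule imageI)
  next
    fix x y z assume xyz: "x \<in> ?r ` ?C" "y \<in> ?r ` ?C" "z \<in> ?r ` ?C"
    then have c: "x \<in> ?C" "y \<in> ?C" "z \<in> ?C" using imgC by blast+
    have "?r (rm_add M (?r (rm_add M x y)) z) = ?r (rm_add M (rm_add M x y) z)"
      using qrep_add1[OF add_closed[OF M c(1,2)] c(3)] .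
    also have "\<dots> = ?r (rm_add M x (rm_add M y z))" using add_assoc[OF M c] by simp
    also have "\<dots> = ?r (rm_add M x (?r (rm_add M y z)))"
      using qrep_add2[OF c(1) add_closed[OF M c(2,3)]] by simp
    finally show "?r (rm_add M (?r (rm_add M x y)) z) = ?r (rm_add M x (?r (rm_add M y z)))" .
  next
    fix x y assume "x \<in> ?r ` ?C" "y \<in> ?r ` ?C"
    then have c: "x \<in> ?C" "y \<in> ?C" using imgC by blast+
    show "?r (rm_add M x y) = ?r (rm_add M y x)" using add_comm[OF M c] by simp
  next
    fix x assume x: "x \<in> ?r ` ?C"
    have c: "x \<in> ?C" using imgC[OF x] .
    have "?r (rm_add M (?r (rm_zero M)) x) = ?r (rm_add M (rm_zero M) x)"
      using qrep_add1[OF zero_closed[OF M] c] .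
    also have "\<dots> = ?r x" using lzero[OF M c] by simp
    also have "\<dots> = x" using imgr[OF x] .
    finally show "?r (rm_add M (?r (rm_zero M)) x) = x" .
  next
    fix x assume x: "x \<in> ?r ` ?C"
    have c: "x \<in> ?C" using imgC[OF x] .
    have "?r (mneg M x) \<in> ?r ` ?C" using neg_closed[OF M c] by (rule imageI)
    moreover have "?r (rm_add M x (?r (mneg M x))) = ?r (rm_zero M)"
      using qrep_add2[OF c neg_closed[OF M c]] add_neg[OF M c] by simp
    ultimately show "\<exists>y\<in>?r ` ?C. ?r (rm_add M x y) = ?r (rm_zero M)" by blast
  next
    fix x y a assume "x \<in> ?r ` ?C" "y \<in> ?r ` ?C"
    then have c: "x \<in> ?C" "y \<in> ?C" using imgC by blast+
    have "?r (rm_act M (?r (rm_add M x y)) a) = ?r (rm_act M (rm_add M x y) a)"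
      using qrep_act1[OF add_closed[OF M c]] .
    also have "\<dots> = ?r (rm_add M (rm_act M x a) (rm_act M y a))" using act_distl[OF M c] by simp
    also have "\<dots> = ?r (rm_add M (?r (rm_act M x a)) (?r (rm_act M y a)))"
      using qrep_add12[OF act_closed[OF M c(1)] act_closed[OF M c(2)]] by simp
    finally show "?r (rm_act M (?r (rm_add M x y)) a) = ?r (rm_add M (?r (rm_act M x a)) (?r (rm_act M y a)))" .
  next
    fix x a b assume "x \<in> ?r ` ?C"
    then have c: "x \<in> ?C" using imgC by blast
    have "?r (rm_act M x (a + b)) = ?r (rm_add M (rm_act M x a) (rm_act M x b))" using act_distr[OF M c] by simp
    also have "\<dots> = ?r (rm_add M (?r (rm_act M x a)) (?r (rm_act M x b)))"
      using qrep_add12[OF act_closed[OF M c] act_closed[OF M c]] by simp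
    finally show "?r (rm_act M x (a + b)) = ?r (rm_add M (?r (rm_act M x a)) (?r (rm_act M x b)))" .
  next
    fix x a b assume "x \<in> ?r ` ?C"
    then have c: "x \<in> ?C" using imgC by blast
    have "?r (rm_act M x (a * b)) = ?r (rm_act M (rm_act M x a) b)" using act_act[OF M c] by simp
    also have "\<dots> = ?r (rm_act M (?r (rm_act M x a)) b)"
      using qrep_act1[OF act_closed[OF M c]] by simp
    finally show "?r (rm_act M x (a * b)) = ?r (rm_act M (?r (rm_act M x a)) b)" .
  next
    fix x assume x: "x \<in> ?r ` ?C"
    have c: "x \<in> ?C" using imgC[OF x] .
    show "?r (rm_act M x 1) = x" using act_one[OF M c] imgr[OF x] by simp
  qed
qed

lemma rhom_qrep: "rhom M (quot M N) (qrep M N)"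
  unfolding rhom_def quot_simps
proof (intro conjI ballI allI)
  fix x assume "x \<in> rm_carrier M" then show "qrep M N x \<in> qrep M N ` rm_carrier M" by (rule imageI)
next
  fix x y assume "x \<in> rm_carrier M" "y \<in> rm_carrier M"
  then show "qrep M N (rm_add M x y) = qrep M N (rm_add M (qrep M N x) (qrep M N y))"
    using qrep_add12 by simp
next
  fix x a assume "x \<in> rm_carrier M"
  then show "qrep M N (rm_act M x a) = qrep M N (rm_act M (qrep M N x) a)"
    using qrep_act1 by simp
qed

lemma qrep_surj: "qrep M N ` rm_carrier M = rm_carrier (quot M N)"
  by simp

lemma kern_qrep: "kern M (quot M N) (qrep M N) = N"
  unfolding kern_def quot_simps using qrep_zero_iff NC by auto

end

lemma fin_gen_image: assumes "rmodule M" "rmodule Z" "fin_gen M" "rhom M Z h" "h ` rm_carrier M = rm_carrier Z"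
  shows "fin_gen Z"
proof -
  obtain S where S: "finite S" "S \<subseteq> rm_carrier M" "\<forall>N. submodule M N \<and> S \<subseteq> N \<longrightarrow> rm_carrier M \<subseteq> N"
    using assms(3) unfolding fin_gen_def by (elim exE conjE) (intro that)
  have *: "rm_carrier Z \<subseteq> N" if "submodule Z N" "h ` S \<subseteq> N" for N
  proof -
    have "submodule M {x \<in> rm_carrier M. h x \<in> N}" by (rule submodule_preimage[OF assms(1,2,4) that(1)])
    moreover have "S \<subseteq> {x \<in> rm_carrier M. h x \<in> N}" using that(2) S(2) by blast
    ultimately have "rm_carrier M \<subseteq> {x \<in> rm_carrier M. h x \<in> N}" using S(3) by blast
    then have "h ` rm_carrier M \<subseteq> N" by blast
    then show ?thesis unfolding assms(5) .
  qed
  have "h ` S \<subseteq> rm_carrier Z" using S(2) unfolding assms(5)[symmetric] by (rule image_mono)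
  moreover have "finite (h ` S)" using S(1) by simp
  ultimately show ?thesis unfolding fin_gen_def
    by (intro exI[of _ "h ` S"] conjI allI impI) (simp_all add: *)
qed

lemma modL_quot: assumes "M \<in> modL" "submodule M N" shows "quot M N \<in> modL"
proof -
  have M: "rmodule M" "fin_gen M" using assms(1) unfolding modL_def by auto
  have "fin_gen (quot M N)"
    using fin_gen_image[OF M(1) rmodule_quot[OF M(1) assms(2)] M(2) rhom_qrep[OF M(1) assms(2)]] by simp
  then show ?thesis using rmodule_quot[OF M(1) assms(2)] unfolding modL_def by simp
qed

lemma modL_image: assumes "M \<in> modL" "rmodule Z" "rhom M Z h" "h ` rm_carrier M = rm_carrier Z"
  shows "Z \<in> modL"
proof -
  have M: "rmodule M" "fin_gen M" using assms(1) unfolding modL_def by auto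
  show ?thesis using fin_gen_image[OF M(1) assms(2) M(2) assms(3,4)] assms(2) unfolding modL_def by simp
qed

lemma modL_zero: assumes "rmodule M" shows "restr M {rm_zero M} \<in> modL"
proof -
  have "rmodule (restr M {rm_zero M})" using rmodule_restr[OF assms submodule_zero[OF assms]] .
  moreover have "fin_gen (restr M {rm_zero M})" unfolding fin_gen_def
  proof (intro exI[of _ "{}"] conjI allI impI)
    fix N assume "submodule (restr M {rm_zero M}) N \<and> {} \<subseteq> N"
    then have "rm_zero M \<in> N" unfolding submodule_def by simp
    then show "rm_carrier (restr M {rm_zero M}) \<subseteq> N" by simp
  qed auto
  ultimately show ?thesis unfolding modL_def by simp
qed


context vector_space begin

lemma dim_psubset_fin: assumes "subspace S" "S \<subset> T" "T \<subseteq> span W" "finite W"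
  shows "dim S < dim T"
proof -
  obtain B where B: "B \<subseteq> S" "independent B" "S \<subseteq> span B" "card B = dim S"
    by (rule basis_exists[of S])
  obtain x where x0: "x \<in> T - S" using psubset_imp_ex_mem[OF assms(2)] by (elim exE)
  have x: "x \<in> T" "x \<notin> S" using x0 by auto
  have sB: "span B \<subseteq> S" using span_minimal[OF B(1) assms(1)] .
  have xB: "x \<notin> span B" using x(2) sB by auto
  have ind: "independent (insert x B)" using independent_insertI[OF xB B(2)] .
  have ST: "S \<subseteq> T" using assms(2) by (rule psubset_imp_subset)
  have iT: "insert x B \<subseteq> T" using B(1) ST x(1) by auto
  obtain BT where BT: "BT \<subseteq> T" "independent BT" "T \<subseteq> span BT" "card BT = dim T"
    by (rule basis_exists[of T])
  have fBT: "finite BT" using independent_span_bound[OF assms(4) BT(2) subset_trans[OF BT(1) assms(3)]] by (rule conjunct1)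
  have fc: "finite (insert x B) \<and> card (insert x B) \<le> card BT"
    using independent_span_bound[OF fBT ind subset_trans[OF iT BT(3)]] .
  have "x \<notin> B" using xB span_superset[of B] by (meson subsetD)
  then have "card (insert x B) = Suc (card B)" using fc by simp
  then show ?thesis using fc B(4) BT(4) by simp
qed

end

fun msum :: "('m, 'l::ring_1) rmod \<Rightarrow> (nat \<Rightarrow> 'm) \<Rightarrow> (nat \<Rightarrow> 'l) \<Rightarrow> nat \<Rightarrow> 'm" where
  "msum M s f 0 = rm_zero M"
| "msum M s f (Suc n) = rm_add M (msum M s f n) (rm_act M (s n) (f n))"

definition edelta :: "nat \<Rightarrow> 'l::zero \<Rightarrow> nat \<Rightarrow> 'l" where
  "edelta j x = (\<lambda>i. if i = j then x else 0)"

context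
  fixes M :: "('m, 'l::ring_1) rmod" and s :: "nat \<Rightarrow> 'm"
  assumes M: "rmodule M" and s: "\<And>i. s i \<in> rm_carrier M"
begin

lemma msum_closed: "msum M s f n \<in> rm_carrier M"
  by (induction n) (simp_all add: M s)

lemma msum_add: "msum M s (\<lambda>i. f i + g i) n = rm_add M (msum M s f n) (msum M s g n)"
proof (induction n)
  case 0 then show ?case using M by simp
next
  case (Suc n)
  have "msum M s (\<lambda>i. f i + g i) (Suc n) = rm_add M (rm_add M (msum M s f n) (msum M s g n))
     (rm_add M (rm_act M (s n) (f n)) (rm_act M (s n) (g n)))"
    using Suc act_distr[OF M s] by simp
  also have "\<dots> = rm_add M (rm_add M (msum M s f n) (rm_act M (s n) (f n))) (rm_add M (msum M s g n) (rm_act M (s n) (g n)))"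
    using add_swap4[OF M msum_closed msum_closed act_closed[OF M s] act_closed[OF M s]] .
  finally show ?case by simp
qed

lemma msum_act: "rm_act M (msum M s f n) a = msum M s (\<lambda>i. f i * a) n"
proof (induction n)
  case 0 then show ?case using M by simp
next
  case (Suc n)
  have "rm_act M (msum M s f (Suc n)) a = rm_add M (rm_act M (msum M s f n) a) (rm_act M (rm_act M (s n) (f n)) a)"
    using act_distl[OF M msum_closed act_closed[OF M s]] by simp
  also have "rm_act M (rm_act M (s n) (f n)) a = rm_act M (s n) (f n * a)"
    using act_act[OF M s] by simp
  finally show ?case using Suc by simp
qed

lemma msum_zero: "msum M s (\<lambda>i. 0) n = rm_zero M"
  by (induction n) (simp_all add: M s)

lemma msum_cong: "(\<And>i. i < n \<Longrightarrow> f i = g i) \<Longrightarrow> msum M s f n = msum M s g n"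
  by (induction n) simp_all

lemma msum_delta: "msum M s (edelta j x) n = (if j < n then rm_act M (s j) x else rm_zero M)"
proof (induction n)
  case 0 then show ?case by simp
next
  case (Suc n)
  show ?case
  proof (cases "j < n")
    case True
    then have "edelta j x n = 0" unfolding edelta_def by simp
    then show ?thesis using Suc True M s act_closed[OF M s] by simp
  next
    case False
    show ?thesis
    proof (cases "j = n")
      case True
      then show ?thesis using Suc False M s act_closed[OF M s] unfolding edelta_def by simp
    next
      case False2: False
      then have "edelta j x n = 0" unfolding edelta_def by simp
      then show ?thesis using Suc False False2 M s by simp
    qed
  qed
qed

end

section \<open>The finite-dimensional algebra setting\<close>

definition vsc :: "('k::field \<Rightarrow> 'l::ring_1 \<Rightarrow> 'l) \<Rightarrow> 'k \<Rightarrow> (nat \<Rightarrow> 'l) \<Rightarrow> (nat \<Rightarrow> 'l)" where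
  "vsc sc c f = (\<lambda>i. sc c (f i))"

definition Vn :: "nat \<Rightarrow> (nat \<Rightarrow> 'l::zero) set" where
  "Vn n = {f. \<forall>i\<ge>n. f i = 0}"

locale fda =
  fixes sc :: "'k::field \<Rightarrow> 'l::ring_1 \<Rightarrow> 'l"
  assumes fd: "fd_algebra sc"
begin

lemma ex_basis: "\<exists>B. finite_dimensional_vector_space sc B"
  using fd unfolding fd_algebra_def by blast

definition "Bas = (SOME B. finite_dimensional_vector_space sc B)"

lemma fdvs: "finite_dimensional_vector_space sc Bas"
  unfolding Bas_def using ex_basis by (rule someI_ex)

lemma vs: "vector_space sc"
  using fdvs unfolding finite_dimensional_vector_space_def by blast

lemma sc_mult: "sc c (x * y) = x * sc c y"
  using fd unfolding fd_algebra_def by blast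

lemma sc_eq: "sc c x = x * sc c 1"
  using sc_mult[of c x 1] by simp

end

sublocale fda \<subseteq> L: finite_dimensional_vector_space sc Bas
  by (rule fdvs)

sublocale fda \<subseteq> V: vector_space "vsc sc"
proof
  fix a :: 'k and x y :: "nat \<Rightarrow> 'l"
  show "vsc sc a (x + y) = vsc sc a x + vsc sc a y"
    unfolding vsc_def by (rule ext) (simp add: L.scale_right_distrib)
next
  fix a b :: 'k and x :: "nat \<Rightarrow> 'l"
  show "vsc sc (a + b) x = vsc sc a x + vsc sc b x"
    unfolding vsc_def by (rule ext) (simp add: L.scale_left_distrib)
next
  fix a b :: 'k and x :: "nat \<Rightarrow> 'l"
  show "vsc sc a (vsc sc b x) = vsc sc (a * b) x"
    unfolding vsc_def by (rule ext) simp
next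
  fix x :: "nat \<Rightarrow> 'l"
  show "vsc sc 1 x = x"
    unfolding vsc_def by (rule ext) simp
qed

context fda begin

definition "Wn n = {edelta j b | j b. j < n \<and> b \<in> Bas}"

lemma finite_Wn: "finite (Wn n)"
proof -
  have "Wn n = (\<lambda>(j, b). edelta j b) ` ({..<n} \<times> Bas)" unfolding Wn_def by auto
  then show ?thesis using L.finite_Basis by simp
qed

lemma edelta_add: "edelta j ((x::'l) + y) = edelta j x + edelta j y"
  unfolding edelta_def by (rule ext) simp

lemma edelta_scale: "edelta j (sc c x) = vsc sc c (edelta j x)"
  unfolding edelta_def vsc_def by (rule ext) simp

lemma edelta_zero: "edelta j (0::'l) = 0"
  unfolding edelta_def by (rule ext) simp

lemma edelta_span: assumes "j < n" shows "edelta j x \<in> V.span (Wn n)"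
proof -
  let ?S = "{x. edelta j x \<in> V.span (Wn n)}"
  have "L.subspace ?S"
  proof (rule L.subspaceI)
    show "0 \<in> ?S" using edelta_zero V.span_zero by simp
  next
    fix x y assume "x \<in> ?S" "y \<in> ?S"
    then show "x + y \<in> ?S" using edelta_add V.span_add by simp
  next
    fix c x assume "x \<in> ?S"
    then show "sc c x \<in> ?S" using edelta_scale V.span_scale by simp
  qed
  moreover have "Bas \<subseteq> ?S"
  proof
    fix b assume "b \<in> Bas"
    then have "edelta j b \<in> Wn n" unfolding Wn_def using assms by blast
    then show "b \<in> ?S" using V.span_base by simp
  qed
  ultimately have "L.span Bas \<subseteq> ?S" using L.span_minimal by blast
  then show ?thesis using L.span_Basis by blast
qed

lemma Vn_span: "f \<in> Vn n \<Longrightarrow> f \<in> V.span (Wn n)"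
proof (induction n arbitrary: f)
  case 0
  then have "f = 0" unfolding Vn_def by (intro ext) simp
  then show ?case using V.span_zero by metis
next
  case (Suc n)
  let ?g = "f(n := 0)"
  have "?g \<in> Vn n" using Suc.prems unfolding Vn_def by auto
  then have "?g \<in> V.span (Wn n)" by (rule Suc.IH)
  moreover have "Wn n \<subseteq> Wn (Suc n)" unfolding Wn_def using less_SucI by blast
  ultimately have g: "?g \<in> V.span (Wn (Suc n))" using V.span_mono by blast
  have "f = ?g + edelta n (f n)" unfolding edelta_def by (rule ext) simp
  then show ?case using V.span_add[OF g edelta_span[of n "Suc n" "f n"]] by simp
qed

lemma Vn_add: "f \<in> Vn n \<Longrightarrow> g \<in> Vn n \<Longrightarrow> (f::nat \<Rightarrow> 'l) + g \<in> Vn n"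
  unfolding Vn_def by simp
lemma Vn_zero: "(0::nat \<Rightarrow> 'l) \<in> Vn n"
  unfolding Vn_def by simp
lemma Vn_scale: "f \<in> Vn n \<Longrightarrow> vsc sc c f \<in> Vn n"
  unfolding Vn_def vsc_def by simp
lemma Vn_mult: "f \<in> Vn n \<Longrightarrow> (\<lambda>i. f i * (a::'l)) \<in> Vn n"
  unfolding Vn_def by simp
lemma Vn_delta: "j < n \<Longrightarrow> edelta j (x::'l) \<in> Vn n"
  unfolding Vn_def edelta_def by simp

end


context fda begin

definition phi :: "('m, 'l) rmod \<Rightarrow> (nat \<Rightarrow> 'm) \<Rightarrow> nat \<Rightarrow> 'm set \<Rightarrow> (nat \<Rightarrow> 'l) set" where
  "phi M s n N = {f \<in> Vn n. msum M s f n \<in> N}"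

lemma gen_data: fixes M :: "'l modl" assumes "M \<in> modL"
  obtains s n where "\<And>i. s i \<in> rm_carrier M" "\<And>m. m \<in> rm_carrier M \<Longrightarrow> \<exists>f\<in>Vn n. msum M s f n = m"
proof -
  have M: "rmodule M" "fin_gen M" using assms unfolding modL_def by auto
  obtain S where S: "finite S" "S \<subseteq> rm_carrier M" "\<forall>N. submodule M N \<and> S \<subseteq> N \<longrightarrow> rm_carrier M \<subseteq> N"
    using M(2) unfolding fin_gen_def by (elim exE conjE) (intro that)
  obtain xs where xs: "set xs = S" using finite_list[OF S(1)] by (elim exE)
  define n where "n = length xs"
  define s where "s = (\<lambda>i. if i < n then xs ! i else rm_zero M)"
  have s: "\<And>i. s i \<in> rm_carrier M"
  proof -
    fix i show "s i \<in> rm_carrier M"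
    proof (cases "i < n")
      case True
      then have "xs ! i \<in> S" using xs n_def nth_mem by blast
      then show ?thesis using True S(2) unfolding s_def by auto
    next
      case False then show ?thesis unfolding s_def using zero_closed[OF M(1)] by simp
    qed
  qed
  define R where "R = {msum M s f n | f. f \<in> Vn n}"
  have "submodule M R" unfolding submodule_def
  proof (intro conjI ballI allI)
    show "R \<subseteq> rm_carrier M" unfolding R_def using msum_closed[of M s, OF M(1) s] by blast
    have "(\<lambda>i. 0::'l) \<in> Vn n" unfolding Vn_def by simp
    moreover have "msum M s (\<lambda>i. 0) n = rm_zero M" using msum_zero[of M s, OF M(1) s] .
    ultimately have "\<exists>f. rm_zero M = msum M s f n \<and> f \<in> Vn n" by metis
    then show "rm_zero M \<in> R" unfolding R_def by simp
  next
    fix x y assume "x \<in> R" "y \<in> R"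
    then obtain f g where fg: "f \<in> Vn n" "g \<in> Vn n" "x = msum M s f n" "y = msum M s g n"
      unfolding R_def by blast
    have "(\<lambda>i. f i + g i) \<in> Vn n" using fg unfolding Vn_def by simp
    moreover have "rm_add M x y = msum M s (\<lambda>i. f i + g i) n" using msum_add[of M s, OF M(1) s] fg by simp
    ultimately show "rm_add M x y \<in> R" unfolding R_def by blast
  next
    fix x a assume "x \<in> R"
    then obtain f where f: "f \<in> Vn n" "x = msum M s f n" unfolding R_def by blast
    have "(\<lambda>i. f i * a) \<in> Vn n" using Vn_mult[OF f(1)] .
    moreover have "rm_act M x a = msum M s (\<lambda>i. f i * a) n" using msum_act[of M s, OF M(1) s] f by simp
    ultimately show "rm_act M x a \<in> R" unfolding R_def by blast
  qed
  moreover have "S \<subseteq> R"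
  proof
    fix x assume "x \<in> S"
    then obtain j where j: "j < n" "x = xs ! j" using xs n_def by (metis in_set_conv_nth)
    have "msum M s (edelta j 1) n = rm_act M (s j) 1" using msum_delta[of M s, OF M(1) s] j by simp
    also have "\<dots> = x" using act_one[OF M(1) s[of j]] j unfolding s_def by simp
    finally show "x \<in> R" unfolding R_def using Vn_delta[OF j(1)] by blast
  qed
  ultimately have "rm_carrier M \<subseteq> R" using S(3) by blast
  then have "\<And>m. m \<in> rm_carrier M \<Longrightarrow> \<exists>f\<in>Vn n. msum M s f n = m" unfolding R_def by blast
  then show ?thesis using s that by blast
qed

context
  fixes M :: "('m, 'l) rmod" and s n
  assumes M: "rmodule M" and s: "\<And>i. s i \<in> rm_carrier M"
    and surj: "\<And>m. m \<in> rm_carrier M \<Longrightarrow> \<exists>f\<in>Vn n. msum M s f n = m"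
begin

lemma phi_subspace: assumes "submodule M N" shows "V.subspace (phi M s n N)"
proof (rule V.subspaceI)
  have "(0::nat \<Rightarrow> 'l) = (\<lambda>i. 0)" by (simp add: zero_fun_def)
  moreover have "msum M s (\<lambda>i. 0) n = rm_zero M" using msum_zero[of M s, OF M s] .
  moreover have "rm_zero M \<in> N" using assms unfolding submodule_def by blast
  ultimately show "0 \<in> phi M s n N" unfolding phi_def using Vn_zero by simp
next
  fix x y assume "x \<in> phi M s n N" "y \<in> phi M s n N"
  then have xy: "x \<in> Vn n" "y \<in> Vn n" "msum M s x n \<in> N" "msum M s y n \<in> N" unfolding phi_def by auto
  have "x + y = (\<lambda>i. x i + y i)" by (simp add: plus_fun_def)
  then have "msum M s (x + y) n = rm_add M (msum M s x n) (msum M s y n)" using msum_add[of M s, OF M s] by simp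
  moreover have "rm_add M (msum M s x n) (msum M s y n) \<in> N" using xy assms unfolding submodule_def by blast
  ultimately show "x + y \<in> phi M s n N" unfolding phi_def using Vn_add[OF xy(1,2)] by simp
next
  fix c x assume "x \<in> phi M s n N"
  then have x: "x \<in> Vn n" "msum M s x n \<in> N" unfolding phi_def by auto
  have "vsc sc c x = (\<lambda>i. x i * sc c 1)" unfolding vsc_def by (rule ext) (rule sc_eq)
  then have "msum M s (vsc sc c x) n = rm_act M (msum M s x n) (sc c 1)" using msum_act[of M s, OF M s] by simp
  moreover have "rm_act M (msum M s x n) (sc c 1) \<in> N" using x assms unfolding submodule_def by blast
  ultimately show "vsc sc c x \<in> phi M s n N" unfolding phi_def using Vn_scale[OF x(1)] by simp
qed

lemma phi_span: "phi M s n N \<subseteq> V.span (Wn n)"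
  unfolding phi_def using Vn_span by blast

lemma phi_mono: "N \<subseteq> N' \<Longrightarrow> phi M s n N \<subseteq> phi M s n N'"
  unfolding phi_def by blast

lemma phi_strict: assumes "N \<subset> N'" "N' \<subseteq> rm_carrier M" shows "phi M s n N \<subset> phi M s n N'"
proof -
  obtain x where x: "x \<in> N'" "x \<notin> N" using assms(1) by blast
  then obtain f where f: "f \<in> Vn n" "msum M s f n = x" using surj assms(2) by blast
  have "f \<in> phi M s n N'" "f \<notin> phi M s n N" unfolding phi_def using f x by auto
  then show ?thesis using phi_mono[OF psubset_imp_subset[OF assms(1)]] by blast
qed

lemma dim_strict: assumes "submodule M N" "submodule M N'" "N \<subset> N'"
  shows "V.dim (phi M s n N) < V.dim (phi M s n N')"
proof -
  have "N' \<subseteq> rm_carrier M" using assms(2) unfolding submodule_def by blast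
  then show ?thesis using V.dim_psubset_fin[OF phi_subspace[OF assms(1)] phi_strict[OF assms(3)] phi_span finite_Wn] by simp
qed

lemma dim_bound: "V.dim (phi M s n N) \<le> card (Wn n)"
  using V.dim_le_card[OF phi_span finite_Wn] .

lemma restr_fg: assumes "submodule M N" shows "fin_gen (restr M N)"
proof -
  obtain B where B: "B \<subseteq> phi M s n N" "V.independent B" "phi M s n N \<subseteq> V.span B"
    by (rule V.maximal_independent_subset[of "phi M s n N"])
  have fB: "finite B" using V.independent_span_bound[OF finite_Wn B(2)] B(1) phi_span by blast
  define T where "T = (\<lambda>f. msum M s f n) ` B"
  have TN: "T \<subseteq> N" unfolding T_def using B(1) unfolding phi_def by blast
  have "N \<subseteq> N''" if "submodule (restr M N) N''" "T \<subseteq> N''" for N''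
  proof -
    have NC: "N \<subseteq> rm_carrier M" using assms unfolding submodule_def by blast
    have sub: "submodule M N''" "N'' \<subseteq> N" using that(1) submodule_restr_iff[OF NC] by blast+
    have "B \<subseteq> phi M s n N''" using B(1) that(2) unfolding T_def phi_def by blast
    then have "V.span B \<subseteq> phi M s n N''" using V.span_minimal phi_subspace[OF sub(1)] by blast
    then have "phi M s n N \<subseteq> phi M s n N''" using B(3) by blast
    then show "N \<subseteq> N''" unfolding phi_def using surj NC by blast
  qed
  then show ?thesis unfolding fin_gen_def restr_simps
    by (intro exI[of _ T] conjI allI impI) (simp_all add: T_def fB TN[unfolded T_def])
qed

end

lemma noeth_fg: fixes M :: "'l modl" assumes "M \<in> modL" "submodule M N" shows "restr M N \<in> modL"
proof -
  have M: "rmodule M" using assms unfolding modL_def by auto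
  obtain s n where sn: "\<And>i. s i \<in> rm_carrier M" "\<And>m. m \<in> rm_carrier M \<Longrightarrow> \<exists>f\<in>Vn n. msum M s f n = m"
    using gen_data[OF assms(1)] by blast
  show ?thesis using restr_fg[of M s n, OF M sn assms(2)] rmodule_restr[OF M assms(2)] unfolding modL_def by simp
qed

lemma noeth_max: fixes M :: "'l modl" assumes "M \<in> modL" "F \<noteq> {}" "\<And>N. N \<in> F \<Longrightarrow> submodule M N"
  shows "\<exists>N\<in>F. \<forall>N'\<in>F. N \<subseteq> N' \<longrightarrow> N' = N"
proof -
  have M: "rmodule M" using assms unfolding modL_def by auto
  obtain s n where sn: "\<And>i. s i \<in> rm_carrier M" "\<And>m. m \<in> rm_carrier M \<Longrightarrow> \<exists>f\<in>Vn n. msum M s f n = m"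
    using gen_data[OF assms(1)] by blast
  define d where "d N = V.dim (phi M s n N)" for N
  have D: "d ` F \<subseteq> {..card (Wn n)}" unfolding d_def using dim_bound[of M s n, OF M sn] by auto
  then have fD: "finite (d ` F)" using finite_subset by blast
  have neD: "d ` F \<noteq> {}" using assms(2) by simp
  obtain N where N: "N \<in> F" "d N = Max (d ` F)" using Max_in[OF fD neD] by (metis imageE)
  show ?thesis
  proof (intro bexI[OF _ N(1)] ballI impI)
    fix N' assume N': "N' \<in> F" "N \<subseteq> N'"
    show "N' = N"
    proof (rule ccontr)
      assume "N' \<noteq> N"
      then have "N \<subset> N'" using N'(2) by blast
      then have "d N < d N'" unfolding d_def using dim_strict[of M s n, OF M sn assms(3)[OF N(1)] assms(3)[OF N'(1)]] by simp
      moreover have "d N' \<le> Max (d ` F)" using Max_ge[OF fD] N'(1) by simp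
      ultimately show False using N(2) by simp
    qed
  qed
qed

lemma noeth_min: fixes M :: "'l modl" assumes "M \<in> modL" "F \<noteq> {}" "\<And>N. N \<in> F \<Longrightarrow> submodule M N"
  shows "\<exists>N\<in>F. \<forall>N'\<in>F. N' \<subseteq> N \<longrightarrow> N' = N"
proof -
  have M: "rmodule M" using assms unfolding modL_def by auto
  obtain s n where sn: "\<And>i. s i \<in> rm_carrier M" "\<And>m. m \<in> rm_carrier M \<Longrightarrow> \<exists>f\<in>Vn n. msum M s f n = m"
    using gen_data[OF assms(1)] by blast
  define d where "d N = V.dim (phi M s n N)" for N
  have D: "d ` F \<subseteq> {..card (Wn n)}" unfolding d_def using dim_bound[of M s n, OF M sn] by auto
  then have fD: "finite (d ` F)" using finite_subset by blast
  have neD: "d ` F \<noteq> {}" using assms(2) by simp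
  obtain N where N: "N \<in> F" "d N = Min (d ` F)" using Min_in[OF fD neD] by (metis imageE)
  show ?thesis
  proof (intro bexI[OF _ N(1)] ballI impI)
    fix N' assume N': "N' \<in> F" "N' \<subseteq> N"
    show "N' = N"
    proof (rule ccontr)
      assume "N' \<noteq> N"
      then have "N' \<subset> N" using N'(2) by blast
      then have "d N' < d N" unfolding d_def using dim_strict[of M s n, OF M sn assms(3)[OF N'(1)] assms(3)[OF N(1)]] by simp
      moreover have "Min (d ` F) \<le> d N'" using Min_le[OF fD] N'(1) by simp
      ultimately show False using N(2) by simp
    qed
  qed
qed

end


section \<open>Factorisation through a surjection\<close>

lemma factor_hom:
  assumes B: "rmodule B" and C: "rmodule C" and Z: "rmodule Z"
    and g: "rhom B C g" and gs: "g ` rm_carrier B = rm_carrier C"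
    and h: "rhom B Z h" and k: "\<And>b. b \<in> rm_carrier B \<Longrightarrow> g b = rm_zero C \<Longrightarrow> h b = rm_zero Z"
  shows "rhom C Z (\<lambda>c. h (inv_into (rm_carrier B) g c))"
    and "\<And>b. b \<in> rm_carrier B \<Longrightarrow> h (inv_into (rm_carrier B) g (g b)) = h b"
proof -
  have eq: "h b = h b'" if "b \<in> rm_carrier B" "b' \<in> rm_carrier B" "g b = g b'" for b b'
  proof -
    have "rm_add B b (mneg B b') \<in> kern B C g" using rhom_eq_kern[OF B C g that] .
    then have "rm_add B b (mneg B b') \<in> kern B Z h" using k unfolding kern_def by blast
    then show ?thesis using rhom_eq[OF B Z h that(1,2)] by blast
  qed
  have inv: "inv_into (rm_carrier B) g (g b) \<in> rm_carrier B \<and> g (inv_into (rm_carrier B) g (g b)) = g b"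
    if "b \<in> rm_carrier B" for b
    using that by (simp add: inv_into_into f_inv_into_f)
  show hb: "\<And>b. b \<in> rm_carrier B \<Longrightarrow> h (inv_into (rm_carrier B) g (g b)) = h b"
    using eq inv by blast
  show "rhom C Z (\<lambda>c. h (inv_into (rm_carrier B) g c))"
    unfolding rhom_def
  proof (intro conjI ballI allI)
    fix x assume "x \<in> rm_carrier C"
    then obtain b where b: "b \<in> rm_carrier B" "x = g b" using gs by blast
    show "h (inv_into (rm_carrier B) g x) \<in> rm_carrier Z" using hb[OF b(1)] b rhom_closed[OF h b(1)] by simp
  next
    fix x y assume "x \<in> rm_carrier C" "y \<in> rm_carrier C"
    then obtain b b' where b: "b \<in> rm_carrier B" "x = g b" "b' \<in> rm_carrier B" "y = g b'" using gs by blast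
    have "rm_add C x y = g (rm_add B b b')" using rhom_add[OF g b(1,3)] b by simp
    then have "h (inv_into (rm_carrier B) g (rm_add C x y)) = h (rm_add B b b')"
      using hb add_closed[OF B b(1,3)] by simp
    also have "\<dots> = rm_add Z (h b) (h b')" using rhom_add[OF h b(1,3)] .
    finally show "h (inv_into (rm_carrier B) g (rm_add C x y)) =
        rm_add Z (h (inv_into (rm_carrier B) g x)) (h (inv_into (rm_carrier B) g y))"
      using hb b by simp
  next
    fix x a assume "x \<in> rm_carrier C"
    then obtain b where b: "b \<in> rm_carrier B" "x = g b" using gs by blast
    have "rm_act C x a = g (rm_act B b a)" using rhom_act[OF g b(1)] b by simp
    then have "h (inv_into (rm_carrier B) g (rm_act C x a)) = h (rm_act B b a)"
      using hb act_closed[OF B b(1)] by simp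
    also have "\<dots> = rm_act Z (h b) a" using rhom_act[OF h b(1)] .
    finally show "h (inv_into (rm_carrier B) g (rm_act C x a)) = rm_act Z (h (inv_into (rm_carrier B) g x)) a"
      using hb b by simp
  qed
qed

lemma inv_hom:
  assumes A: "rmodule A" and B: "rmodule B" and f: "rhom A B f" and inj: "inj_on f (rm_carrier A)"
  shows "rhom (restr B (f ` rm_carrier A)) A (inv_into (rm_carrier A) f)"
proof -
  have sub: "submodule B (f ` rm_carrier A)" using submodule_image[OF A B f submodule_carrier[OF A]] .
  have f': "rhom A (restr B (f ` rm_carrier A)) f" using rhom_restr_cod[OF f] by simp
  have k: "id a = rm_zero A" if "a \<in> rm_carrier A" "f a = rm_zero (restr B (f ` rm_carrier A))" for a
    using that kern_inj[OF A B f inj] unfolding kern_def by auto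
  have hid: "rhom A A id" unfolding rhom_def by simp
  have gs: "f ` rm_carrier A = rm_carrier (restr B (f ` rm_carrier A))" by simp
  have "rhom (restr B (f ` rm_carrier A)) A (\<lambda>c. id (inv_into (rm_carrier A) f c))"
    by (rule factor_hom(1)[OF A rmodule_restr[OF B sub] A f' gs hid k])
  then show ?thesis by simp
qed

locale tc = fda sc for sc :: "'k::field \<Rightarrow> 'l::ring_1 \<Rightarrow> 'l" +
  fixes G :: "'l modl set"
  assumes tcG: "torsion_class G"
begin

lemma G_modL: "X \<in> G \<Longrightarrow> X \<in> modL"
  using tcG unfolding torsion_class_def by blast

lemma G_rmod: "X \<in> G \<Longrightarrow> rmodule X"
  using G_modL unfolding modL_def by blast

lemma modL_rmod: "X \<in> modL \<Longrightarrow> rmodule X"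
  unfolding modL_def by blast

lemma G_quot: "B \<in> G \<Longrightarrow> C \<in> modL \<Longrightarrow> rhom B C g \<Longrightarrow> g ` rm_carrier B = rm_carrier C \<Longrightarrow> C \<in> G"
  using tcG unfolding torsion_class_def by blast

lemma G_ext: "A \<in> G \<Longrightarrow> C \<in> G \<Longrightarrow> B \<in> modL \<Longrightarrow> short_exact A f B g C \<Longrightarrow> B \<in> G"
  using tcG unfolding torsion_class_def by blast

lemma G_img: assumes "restr Y A \<in> G" "Y \<in> modL" "Z \<in> modL" "rhom Y Z h" "A \<subseteq> rm_carrier Y"
  shows "restr Z (h ` A) \<in> G"
proof -
  have Y: "rmodule Y" and Z: "rmodule Z" using assms modL_rmod by auto
  have subA: "submodule Y A" using G_rmod[OF assms(1)] assms(5)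
    unfolding rmodule_def submodule_def by simp
  have sub: "submodule Z (h ` A)" using submodule_image[OF Y Z assms(4) subA] .
  have "restr Z (h ` A) \<in> modL" using noeth_fg[OF assms(3) sub] .
  moreover have "rhom (restr Y A) (restr Z (h ` A)) h"
    using rhom_restr_cod[OF rhom_restr_dom[OF assms(4,5)]] by simp
  ultimately show ?thesis using G_quot[OF assms(1)] by simp
qed

lemma G_ext_sub: assumes Y: "Y \<in> modL" and Z: "Z \<in> modL" and h: "rhom Y Z h" and D: "submodule Y D"
  and K: "restr Y {x \<in> D. h x = rm_zero Z} \<in> G" and I: "restr Z (h ` D) \<in> G"
  shows "restr Y D \<in> G"
proof -
  have Yr: "rmodule Y" and Zr: "rmodule Z" using Y Z modL_rmod by auto
  have DC: "D \<subseteq> rm_carrier Y" using D unfolding submodule_def by blast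
  let ?K = "{x \<in> D. h x = rm_zero Z}"
  have "short_exact (restr Y ?K) id (restr Y D) h (restr Z (h ` D))"
    unfolding short_exact_def
  proof (intro conjI)
    show "rhom (restr Y ?K) (restr Y D) id" unfolding rhom_def by auto
    show "rhom (restr Y D) (restr Z (h ` D)) h"
      using rhom_restr_cod[OF rhom_restr_dom[OF h DC]] by simp
    show "inj_on id (rm_carrier (restr Y ?K))" by simp
    show "h ` rm_carrier (restr Y D) = rm_carrier (restr Z (h ` D))" by simp
    show "id ` rm_carrier (restr Y ?K) = kern (restr Y D) (restr Z (h ` D)) h"
      unfolding kern_def by auto
  qed
  moreover have "restr Y D \<in> modL" using noeth_fg[OF Y D] .
  ultimately show ?thesis using G_ext[OF K I] by blast
qed

lemma G_zero: assumes "Y \<in> G" shows "restr Y {rm_zero Y} \<in> G"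
proof -
  have Y: "rmodule Y" using G_rmod[OF assms] .
  have "rhom Y Y (\<lambda>_. rm_zero Y)" unfolding rhom_def using Y by simp
  moreover have "(\<lambda>_. rm_zero Y) ` rm_carrier Y = {rm_zero Y}" using zero_closed[OF Y] by blast
  ultimately show ?thesis using G_img[of Y "rm_carrier Y" Y "\<lambda>_. rm_zero Y"] assms G_modL by simp
qed

end


context tc begin

lemma subobj_restr_iff: "A \<subseteq> rm_carrier Y \<Longrightarrow> subobj G (restr Y A) B \<longleftrightarrow> subobj G Y B \<and> B \<subseteq> A"
  unfolding subobj_def using submodule_restr_iff[of A Y B] by auto

lemma subobj_C: "subobj G Y A \<Longrightarrow> A \<subseteq> rm_carrier Y"
  unfolding subobj_def submodule_def by blast

lemma subobj_sub: "subobj G Y A \<Longrightarrow> submodule Y A"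
  unfolding subobj_def by blast

lemma subobj_G: "subobj G Y A \<Longrightarrow> restr Y A \<in> G"
  unfolding subobj_def by blast

lemma strict_subobj: "strict_sub G Y A \<Longrightarrow> subobj G Y A"
  unfolding strict_sub_def by blast

lemma strict_Int: "strict_sub G Y A \<Longrightarrow> subobj G Y B \<Longrightarrow> restr Y (A \<inter> B) \<in> G"
  unfolding strict_sub_def by blast

lemma subobj_Int: "strict_sub G Y A \<Longrightarrow> subobj G Y B \<Longrightarrow> subobj G Y (A \<inter> B)"
  using strict_Int[of Y A B] submodule_Int[OF subobj_sub[OF strict_subobj] subobj_sub]
  unfolding subobj_def by blast

lemma strict_self: assumes "Y \<in> G" shows "strict_sub G Y (rm_carrier Y)"
  unfolding strict_sub_def subobj_def
proof (intro conjI allI impI)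
  show "submodule Y (rm_carrier Y)" using submodule_carrier[OF G_rmod[OF assms]] .
  show "restr Y (rm_carrier Y) \<in> G" using assms by simp
  fix B' assume "submodule Y B' \<and> restr Y B' \<in> G"
  moreover then have "rm_carrier Y \<inter> B' = B'" unfolding submodule_def by blast
  ultimately show "restr Y (rm_carrier Y \<inter> B') \<in> G" by simp
qed

lemma strict_zero: assumes "Y \<in> G" shows "strict_sub G Y {rm_zero Y}"
  unfolding strict_sub_def subobj_def
proof (intro conjI allI impI)
  show "submodule Y {rm_zero Y}" using submodule_zero[OF G_rmod[OF assms]] .
  show "restr Y {rm_zero Y} \<in> G" using G_zero[OF assms] .
  fix B' assume "submodule Y B' \<and> restr Y B' \<in> G"
  moreover then have "{rm_zero Y} \<inter> B' = {rm_zero Y}" unfolding submodule_def by blast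
  ultimately show "restr Y ({rm_zero Y} \<inter> B') \<in> G" using G_zero[OF assms] by simp
qed

lemma strict_restr: assumes "strict_sub G Y A" "subobj G Y A'" "A \<subseteq> A'"
  shows "strict_sub G (restr Y A') A"
proof -
  have A'C: "A' \<subseteq> rm_carrier Y" using subobj_C[OF assms(2)] .
  have "subobj G (restr Y A') A" using subobj_restr_iff[OF A'C] strict_subobj[OF assms(1)] assms(3) by blast
  moreover have "restr (restr Y A') (A \<inter> B') \<in> G" if "subobj G (restr Y A') B'" for B'
  proof -
    have "subobj G Y B'" using that subobj_restr_iff[OF A'C] by blast
    then show ?thesis using strict_Int[OF assms(1)] by simp
  qed
  ultimately show ?thesis unfolding strict_sub_def by blast
qed

lemma strict_trans: assumes "strict_sub G (restr Y A') A" "strict_sub G Y A'"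
  shows "strict_sub G Y A"
proof -
  have A'C: "A' \<subseteq> rm_carrier Y" using subobj_C[OF strict_subobj[OF assms(2)]] .
  have A: "subobj G Y A" "A \<subseteq> A'" using strict_subobj[OF assms(1)] subobj_restr_iff[OF A'C] by blast+
  moreover have "restr Y (A \<inter> B') \<in> G" if "subobj G Y B'" for B'
  proof -
    have "subobj G Y (A' \<inter> B')" using subobj_Int[OF assms(2) that] .
    then have "subobj G (restr Y A') (A' \<inter> B')" using subobj_restr_iff[OF A'C] by blast
    then have "restr (restr Y A') (A \<inter> (A' \<inter> B')) \<in> G" using strict_Int[OF assms(1)] by blast
    moreover have "A \<inter> (A' \<inter> B') = A \<inter> B'" using A(2) by blast
    ultimately show ?thesis by simp
  qed
  ultimately show ?thesis unfolding strict_sub_def by blast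
qed

lemma strict_push: assumes Y: "Y \<in> G" and C: "C \<in> G" and g: "rhom Y C g" and gs: "g ` rm_carrier Y = rm_carrier C"
  and K: "restr Y (kern Y C g) \<in> G" and L: "strict_sub G Y L"
  shows "strict_sub G C (g ` L)"
proof -
  have Yr: "rmodule Y" and Cr: "rmodule C" using Y C G_rmod by auto
  have YL: "Y \<in> modL" and CL: "C \<in> modL" using Y C G_modL by auto
  have LC: "L \<subseteq> rm_carrier Y" using subobj_C[OF strict_subobj[OF L]] .
  have subL: "submodule C (g ` L)" using submodule_image[OF Yr Cr g subobj_sub[OF strict_subobj[OF L]]] .
  have GL: "restr C (g ` L) \<in> G" using G_img[OF subobj_G[OF strict_subobj[OF L]] YL CL g LC] .
  have "restr C (g ` L \<inter> C') \<in> G" if C': "subobj G C C'" for C'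
  proof -
    define D where "D = {y \<in> rm_carrier Y. g y \<in> C'}"
    have subD: "submodule Y D" unfolding D_def using submodule_preimage[OF Yr Cr g subobj_sub[OF C']] .
    have z: "rm_zero C \<in> C'" using subobj_sub[OF C'] unfolding submodule_def by blast
    have kD: "{x \<in> D. g x = rm_zero C} = kern Y C g" unfolding D_def kern_def using z by auto
    have C'C: "C' \<subseteq> rm_carrier C" using subobj_C[OF C'] .
    have iD: "g ` D = C'"
    proof
      show "g ` D \<subseteq> C'" unfolding D_def by blast
      show "C' \<subseteq> g ` D"
      proof
        fix c assume "c \<in> C'"
        then obtain y where "y \<in> rm_carrier Y" "c = g y" using C'C gs by blast
        then show "c \<in> g ` D" unfolding D_def using \<open>c \<in> C'\<close> by blast
      qed
    qed
    have "restr Y D \<in> G" using G_ext_sub[OF YL CL g subD] K kD subobj_G[OF C'] iD by simp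
    then have "subobj G Y D" using subD unfolding subobj_def by blast
    then have "restr Y (L \<inter> D) \<in> G" using strict_Int[OF L] by blast
    then have "restr C (g ` (L \<inter> D)) \<in> G" using G_img[OF _ YL CL g] LC by blast
    moreover have "g ` (L \<inter> D) = g ` L \<inter> C'" unfolding D_def using LC by blast
    ultimately show ?thesis by simp
  qed
  then show ?thesis unfolding strict_sub_def subobj_def using subL GL by blast
qed

lemma strict_pull: assumes A: "A \<in> G" and W: "W \<in> G" and f: "rhom A W f" and inj: "inj_on f (rm_carrier A)"
  and fs: "f ` rm_carrier A = rm_carrier W" and S: "strict_sub G W S"
  shows "strict_sub G A {a \<in> rm_carrier A. f a \<in> S}"
proof -
  let ?P = "{a \<in> rm_carrier A. f a \<in> S}"
  have Ar: "rmodule A" and Wr: "rmodule W" using A W G_rmod by auto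
  have AL: "A \<in> modL" and WL: "W \<in> modL" using A W G_modL by auto
  have SC: "S \<subseteq> rm_carrier W" using subobj_C[OF strict_subobj[OF S]] .
  have kz: "{x \<in> D. f x = rm_zero W} = {rm_zero A}" if "submodule A D" for D
  proof -
    have "rm_zero A \<in> D" using that unfolding submodule_def by blast
    moreover have "kern A W f = {rm_zero A}" using kern_inj[OF Ar Wr f inj] .
    moreover have "D \<subseteq> rm_carrier A" using that unfolding submodule_def by blast
    ultimately show ?thesis using rhom_zero[OF Ar Wr f] unfolding kern_def by blast
  qed
  have subP: "submodule A ?P" using submodule_preimage[OF Ar Wr f subobj_sub[OF strict_subobj[OF S]]] .
  have iP: "f ` ?P = S"
  proof
    show "f ` ?P \<subseteq> S" by blast
    show "S \<subseteq> f ` ?P"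
    proof
      fix c assume "c \<in> S"
      then obtain y where "y \<in> rm_carrier A" "c = f y" using SC fs by blast
      then show "c \<in> f ` ?P" using \<open>c \<in> S\<close> by blast
    qed
  qed
  have GP: "restr A ?P \<in> G" using G_ext_sub[OF AL WL f subP] kz[OF subP] G_zero[OF A] iP subobj_G[OF strict_subobj[OF S]] by simp
  have "restr A (?P \<inter> B'') \<in> G" if B'': "subobj G A B''" for B''
  proof -
    have subI: "submodule A (?P \<inter> B'')" using submodule_Int[OF subP subobj_sub[OF B'']] .
    have BC: "B'' \<subseteq> rm_carrier A" using subobj_C[OF B''] .
    have "restr W (f ` B'') \<in> G" using G_img[OF subobj_G[OF B''] AL WL f BC] .
    moreover have "submodule W (f ` B'')" using submodule_image[OF Ar Wr f subobj_sub[OF B'']] .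
    ultimately have "subobj G W (f ` B'')" unfolding subobj_def by blast
    then have "restr W (S \<inter> f ` B'') \<in> G" using strict_Int[OF S] by blast
    moreover have "f ` (?P \<inter> B'') = S \<inter> f ` B''" using BC by blast
    ultimately show ?thesis using G_ext_sub[OF AL WL f subI] kz[OF subI] G_zero[OF A] by simp
  qed
  then show ?thesis unfolding strict_sub_def subobj_def using subP GP by blast
qed

lemma mor_incl: assumes Y: "Y \<in> G" and h: "strict_mor G X (restr Y A) h" and A: "strict_sub G Y A"
  shows "strict_mor G X Y h"
proof -
  have AC: "A \<subseteq> rm_carrier Y" using subobj_C[OF strict_subobj[OF A]] .
  have "rhom X Y h" using h rhom_restr_cod_D[OF _ AC] unfolding strict_mor_def by blast
  moreover have "strict_sub G Y (h ` rm_carrier X)" using strict_trans[OF _ A] h unfolding strict_mor_def by blast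
  ultimately show ?thesis using h Y unfolding strict_mor_def kern_restr by blast
qed

lemma mor_quot: assumes "strict_mor G X Y h" shows "strict_quot G X (restr Y (h ` rm_carrier X))"
proof -
  have "rhom X (restr Y (h ` rm_carrier X)) h" using assms rhom_restr_cod unfolding strict_mor_def by blast
  moreover have "restr Y (h ` rm_carrier X) \<in> G" using assms subobj_G strict_subobj unfolding strict_mor_def by blast
  ultimately show ?thesis using assms unfolding strict_quot_def strict_mor_def kern_restr by auto
qed

end


context tc begin

lemma strict_Int_strict: assumes "strict_sub G Y A" "strict_sub G Y A'" shows "strict_sub G Y (A \<inter> A')"
proof -
  have "subobj G Y (A \<inter> A')" using subobj_Int[OF assms(1) strict_subobj[OF assms(2)]] .
  moreover have "restr Y (A \<inter> A' \<inter> B') \<in> G" if "subobj G Y B'" for B'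
  proof -
    have "subobj G Y (A' \<inter> B')" using subobj_Int[OF assms(2) that] .
    then have "restr Y (A \<inter> (A' \<inter> B')) \<in> G" using strict_Int[OF assms(1)] by blast
    then show ?thesis by (simp add: Int_assoc)
  qed
  ultimately show ?thesis unfolding strict_sub_def by blast
qed

lemma strict_img_mor: assumes h: "strict_mor G B Z h" and S: "strict_sub G B S"
  shows "strict_sub G Z (h ` S)"
proof -
  have B: "B \<in> G" and Z: "Z \<in> G" and hh: "rhom B Z h" using h unfolding strict_mor_def by auto
  have Br: "rmodule B" and Zr: "rmodule Z" using B Z G_rmod by auto
  have BL: "B \<in> modL" and ZL: "Z \<in> modL" using B Z G_modL by auto
  have SC: "S \<subseteq> rm_carrier B" using subobj_C[OF strict_subobj[OF S]] .
  have Lk: "strict_sub G B (kern B Z h)" and Im: "strict_sub G Z (h ` rm_carrier B)"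
    using h unfolding strict_mor_def by auto
  have subS: "submodule Z (h ` S)" using submodule_image[OF Br Zr hh subobj_sub[OF strict_subobj[OF S]]] .
  have GS: "restr Z (h ` S) \<in> G" using G_img[OF subobj_G[OF strict_subobj[OF S]] BL ZL hh SC] .
  have "restr Z (h ` S \<inter> Z') \<in> G" if Z': "subobj G Z Z'" for Z'
  proof -
    define D where "D = {y \<in> rm_carrier B. h y \<in> Z'}"
    have subD: "submodule B D" unfolding D_def using submodule_preimage[OF Br Zr hh subobj_sub[OF Z']] .
    have z: "rm_zero Z \<in> Z'" using subobj_sub[OF Z'] unfolding submodule_def by blast
    have kD: "{x \<in> D. h x = rm_zero Z} = kern B Z h" unfolding D_def kern_def using z by auto
    have iD: "h ` D = h ` rm_carrier B \<inter> Z'" unfolding D_def by blast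
    have "restr Z (h ` rm_carrier B \<inter> Z') \<in> G" using strict_Int[OF Im Z'] .
    then have "restr B D \<in> G" using G_ext_sub[OF BL ZL hh subD] kD iD subobj_G[OF strict_subobj[OF Lk]] by simp
    then have "subobj G B D" using subD unfolding subobj_def by blast
    then have "restr B (S \<inter> D) \<in> G" using strict_Int[OF S] by blast
    then have "restr Z (h ` (S \<inter> D)) \<in> G" using G_img[OF _ BL ZL hh] SC by blast
    moreover have "h ` (S \<inter> D) = h ` S \<inter> Z'" unfolding D_def using SC by blast
    ultimately show ?thesis by simp
  qed
  then show ?thesis unfolding strict_sub_def subobj_def using subS GS by blast
qed

lemma strict_preimage: assumes X: "X \<in> G" and C: "C \<in> G" and g: "rhom X C g" and gs: "g ` rm_carrier X = rm_carrier C"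
  and N: "strict_sub G X (kern X C g)" and K: "strict_sub G C K"
  shows "strict_sub G X {x \<in> rm_carrier X. g x \<in> K}"
proof -
  let ?M = "{x \<in> rm_carrier X. g x \<in> K}"
  have Xr: "rmodule X" and Cr: "rmodule C" using X C G_rmod by auto
  have XL: "X \<in> modL" and CL: "C \<in> modL" using X C G_modL by auto
  have KC: "K \<subseteq> rm_carrier C" using subobj_C[OF strict_subobj[OF K]] .
  have z: "rm_zero C \<in> K" using subobj_sub[OF strict_subobj[OF K]] unfolding submodule_def by blast
  have subM: "submodule X ?M" using submodule_preimage[OF Xr Cr g subobj_sub[OF strict_subobj[OF K]]] .
  have kz: "{x \<in> D. g x = rm_zero C} = D \<inter> kern X C g" if "D \<subseteq> rm_carrier X" for D
    unfolding kern_def using that by auto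
  have surjK: "g ` ?M = K"
  proof
    show "g ` ?M \<subseteq> K" by blast
    show "K \<subseteq> g ` ?M"
    proof
      fix c assume "c \<in> K"
      then obtain y where "y \<in> rm_carrier X" "c = g y" using KC gs by blast
      then show "c \<in> g ` ?M" using \<open>c \<in> K\<close> by blast
    qed
  qed
  have MC: "?M \<subseteq> rm_carrier X" by blast
  have kM: "?M \<inter> kern X C g = kern X C g" unfolding kern_def using z by auto
  have GM: "restr X ?M \<in> G" using G_ext_sub[OF XL CL g subM] kz[OF MC] kM
    subobj_G[OF strict_subobj[OF N]] surjK subobj_G[OF strict_subobj[OF K]] by simp
  have "restr X (?M \<inter> B') \<in> G" if B': "subobj G X B'" for B'
  proof -
    have subI: "submodule X (?M \<inter> B')" using submodule_Int[OF subM subobj_sub[OF B']] .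
    have BC: "B' \<subseteq> rm_carrier X" using subobj_C[OF B'] .
    have "restr C (g ` B') \<in> G" using G_img[OF subobj_G[OF B'] XL CL g BC] .
    moreover have "submodule C (g ` B')" using submodule_image[OF Xr Cr g subobj_sub[OF B']] .
    ultimately have "subobj G C (g ` B')" unfolding subobj_def by blast
    then have "restr C (K \<inter> g ` B') \<in> G" using strict_Int[OF K] by blast
    moreover have "g ` (?M \<inter> B') = K \<inter> g ` B'" using BC by blast
    moreover have "(?M \<inter> B') \<inter> kern X C g = kern X C g \<inter> B'" unfolding kern_def using z by auto
    moreover have "restr X (kern X C g \<inter> B') \<in> G" using strict_Int[OF N B'] .
    moreover have "?M \<inter> B' \<subseteq> rm_carrier X" using MC by blast
    ultimately show ?thesis using G_ext_sub[OF XL CL g subI] kz[of "?M \<inter> B'"] by simp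
  qed
  then show ?thesis unfolding strict_sub_def subobj_def using subM GM by blast
qed

section \<open>Part 1: pseudo-torsion classes\<close>

lemma pt_img: assumes "pseudo_torsion G P" "X \<in> P" "strict_mor G X Y h"
  shows "restr Y (h ` rm_carrier X) \<in> P"
  using assms mor_quot unfolding pseudo_torsion_def by blast

lemma rperp_G: "rperp G P \<subseteq> G" unfolding rperp_def by blast
lemma lperp_G: "lperp G P \<subseteq> G" unfolding lperp_def by blast

lemma rperpD: "Y \<in> rperp G P \<Longrightarrow> X \<in> P \<Longrightarrow> strict_mor G X Y f \<Longrightarrow> x \<in> rm_carrier X \<Longrightarrow> f x = rm_zero Y"
  unfolding rperp_def by blast

lemma lperpD: "Y \<in> lperp G Q \<Longrightarrow> X \<in> Q \<Longrightarrow> strict_mor G Y X f \<Longrightarrow> y \<in> rm_carrier Y \<Longrightarrow> f y = rm_zero X"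
  unfolding lperp_def by blast

lemma rperp_sub: assumes P: "pseudo_torsion G P" and Y: "Y \<in> rperp G P" and A: "strict_sub G Y A"
  shows "restr Y A \<in> rperp G P"
proof -
  have YG: "Y \<in> G" using Y rperp_G by blast
  have "restr Y A \<in> G" using subobj_G[OF strict_subobj[OF A]] .
  moreover have "f x = rm_zero (restr Y A)" if "X0 \<in> P" "strict_mor G X0 (restr Y A) f" "x \<in> rm_carrier X0" for X0 f x
    using rperpD[OF Y that(1) mor_incl[OF YG that(2) A] that(3)] by simp
  ultimately show ?thesis unfolding rperp_def by blast
qed

lemma rperp_ext: assumes P: "pseudo_torsion G P" and E: "strict_exact G A f B g C"
  and Ar: "A \<in> rperp G P" and Cr: "C \<in> rperp G P"
  shows "B \<in> rperp G P"
proof -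
  have AG: "A \<in> G" and BG: "B \<in> G" and CG: "C \<in> G" using E unfolding strict_exact_def by auto
  have Amod: "rmodule A" and Bmod: "rmodule B" and Cmod: "rmodule C" using AG BG CG G_rmod by auto
  have f: "rhom A B f" and g: "rhom B C g" and inj: "inj_on f (rm_carrier A)"
    and gs: "g ` rm_carrier B = rm_carrier C" and fk: "f ` rm_carrier A = kern B C g"
    using E unfolding strict_exact_def short_exact_def by auto
  let ?A' = "f ` rm_carrier A"
  have A'S: "strict_sub G B ?A'" using E unfolding strict_exact_def by auto
  have A'C: "?A' \<subseteq> rm_carrier B" using subobj_C[OF strict_subobj[OF A'S]] .
  have "\<forall>x\<in>rm_carrier X. h x = rm_zero B" if X: "X \<in> P" and h: "strict_mor G X B h" for X h
  proof -
    let ?I = "h ` rm_carrier X"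
    have XG: "X \<in> G" using X P unfolding pseudo_torsion_def by blast
    have hh: "rhom X B h" using h unfolding strict_mor_def by blast
    have IS: "strict_sub G B ?I" using h unfolding strict_mor_def by blast
    have IC: "?I \<subseteq> rm_carrier B" using subobj_C[OF strict_subobj[OF IS]] .
    have IP: "restr B ?I \<in> P" using pt_img[OF P X h] .
    have IG: "restr B ?I \<in> G" using subobj_G[OF strict_subobj[OF IS]] .
    have gI: "strict_mor G (restr B ?I) C g"
      unfolding strict_mor_def
    proof (intro conjI)
      show "restr B ?I \<in> G" by (rule IG)
      show "C \<in> G" by (rule CG)
      show "rhom (restr B ?I) C g" using rhom_restr_dom[OF g IC] .
      have "kern (restr B ?I) C g = ?I \<inter> ?A'" using kern_restr_dom[OF IC] fk by simp
      moreover have "strict_sub G (restr B ?I) (?I \<inter> ?A')"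
        using strict_restr[OF strict_Int_strict[OF IS A'S] strict_subobj[OF IS]] by blast
      ultimately show "strict_sub G (restr B ?I) (kern (restr B ?I) C g)" by simp
      have "restr B (kern B C g) \<in> G" using subobj_G[OF strict_subobj[OF A'S]] fk by simp
      then show "strict_sub G C (g ` rm_carrier (restr B ?I))"
        using strict_push[OF BG CG g gs _ IS] by simp
    qed
    have IA': "?I \<subseteq> ?A'"
    proof
      fix y assume y: "y \<in> ?I"
      have "g y = rm_zero C" using rperpD[OF Cr IP gI] y by simp
      then show "y \<in> ?A'" using fk IC y unfolding kern_def by blast
    qed
    define h' where "h' = (\<lambda>x. inv_into (rm_carrier A) f (h x))"
    have subA': "submodule B ?A'" using subobj_sub[OF strict_subobj[OF A'S]] .
    have W: "restr B ?A' \<in> G" using subobj_G[OF strict_subobj[OF A'S]] .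
    have fW: "rhom A (restr B ?A') f" using rhom_restr_cod[OF f] by simp
    have hW: "rhom X (restr B ?A') h" using rhom_restr_cod[OF hh] IA' by simp
    have invh: "rhom (restr B ?A') A (inv_into (rm_carrier A) f)" using inv_hom[OF Amod Bmod f inj] .
    have hh': "rhom X A h'" using rhom_comp[OF hW invh] unfolding h'_def comp_def by simp
    have fz: "f (rm_zero A) = rm_zero B" using rhom_zero[OF Amod Bmod f] .
    have hinv: "f (h' x) = h x" if "x \<in> rm_carrier X" for x
      unfolding h'_def using IA' that by (intro f_inv_into_f) blast
    have h'C: "h' x \<in> rm_carrier A" if "x \<in> rm_carrier X" for x
      using rhom_closed[OF hh' that] .
    have kk: "kern X A h' = kern X B h"
    proof (rule set_eqI)
      fix x show "x \<in> kern X A h' \<longleftrightarrow> x \<in> kern X B h"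
      proof
        assume "x \<in> kern X A h'"
        then have "x \<in> rm_carrier X" "h' x = rm_zero A" unfolding kern_def by auto
        then show "x \<in> kern X B h" using hinv fz unfolding kern_def by force
      next
        assume "x \<in> kern X B h"
        then have x: "x \<in> rm_carrier X" "h x = rm_zero B" unfolding kern_def by auto
        then have "f (h' x) = f (rm_zero A)" using hinv fz by simp
        then have "h' x = rm_zero A" using inj_onD[OF inj] h'C[OF x(1)] zero_closed[OF Amod] by blast
        then show "x \<in> kern X A h'" using x unfolding kern_def by blast
      qed
    qed
    have im: "h' ` rm_carrier X = {a \<in> rm_carrier A. f a \<in> ?I}"
    proof (rule set_eqI)
      fix a show "a \<in> h' ` rm_carrier X \<longleftrightarrow> a \<in> {a \<in> rm_carrier A. f a \<in> ?I}"
      proof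
        assume "a \<in> h' ` rm_carrier X"
        then obtain x where x: "x \<in> rm_carrier X" "a = h' x" by blast
        then show "a \<in> {a \<in> rm_carrier A. f a \<in> ?I}" using hinv h'C by auto
      next
        assume "a \<in> {a \<in> rm_carrier A. f a \<in> ?I}"
        then obtain x where x: "a \<in> rm_carrier A" "x \<in> rm_carrier X" "f a = h x" by blast
        have "h' x = inv_into (rm_carrier A) f (f a)" unfolding h'_def using x by simp
        also have "\<dots> = a" using inv_into_f_f[OF inj x(1)] .
        finally show "a \<in> h' ` rm_carrier X" using x(2) by (metis imageI)
      qed
    qed
    have IS': "strict_sub G (restr B ?A') ?I" using strict_restr[OF IS strict_subobj[OF A'S] IA'] .
    have "strict_sub G A {a \<in> rm_carrier A. f a \<in> ?I}"
      using strict_pull[OF AG W fW inj _ IS'] by simp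
    then have smh': "strict_mor G X A h'"
      unfolding strict_mor_def using XG AG hh' kk im h unfolding strict_mor_def by simp
    show ?thesis
    proof
      fix x assume x: "x \<in> rm_carrier X"
      have "h' x = rm_zero A" using rperpD[OF Ar X smh' x] .
      then show "h x = rm_zero B" using hinv[OF x] fz by simp
    qed
  qed
  then show ?thesis unfolding rperp_def using BG by blast
qed

lemma rperp_ne: assumes P: "pseudo_torsion G P" shows "rperp G P \<noteq> {}"
proof -
  obtain X where X: "X \<in> P" using P unfolding pseudo_torsion_def by blast
  have XG: "X \<in> G" using X P unfolding pseudo_torsion_def by blast
  have "restr X {rm_zero X} \<in> rperp G P"
    unfolding rperp_def
  proof (intro CollectI conjI ballI allI impI)
    show "restr X {rm_zero X} \<in> G" using G_zero[OF XG] .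
    fix X0 f x assume "X0 \<in> P" "strict_mor G X0 (restr X {rm_zero X}) f" "x \<in> rm_carrier X0"
    then have "f x \<in> {rm_zero X}" using rhom_closed unfolding strict_mor_def by fastforce
    then show "f x = rm_zero (restr X {rm_zero X})" by simp
  qed
  then show ?thesis by blast
qed

lemma rperp_ptf: assumes P: "pseudo_torsion G P" shows "pseudo_torsionfree G (rperp G P)"
  unfolding pseudo_torsionfree_def
  using rperp_ne[OF P] rperp_G rperp_sub[OF P] rperp_ext[OF P] by blast

end


context tc begin

lemma pt_G: "pseudo_torsion G P \<Longrightarrow> P \<subseteq> G" unfolding pseudo_torsion_def by blast

lemma pt_zero: assumes P: "pseudo_torsion G P" and Y: "Y \<in> G" shows "restr Y {rm_zero Y} \<in> P"
proof -
  obtain X where X: "X \<in> P" using P unfolding pseudo_torsion_def by blast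
  have XG: "X \<in> G" using X pt_G[OF P] by blast
  have Xr: "rmodule X" and Yr: "rmodule Y" using XG Y G_rmod by auto
  have hom: "rhom X (restr Y {rm_zero Y}) (\<lambda>_. rm_zero Y)"
    unfolding rhom_def using Yr by simp
  have surj: "(\<lambda>_. rm_zero Y) ` rm_carrier X = rm_carrier (restr Y {rm_zero Y})"
    using zero_closed[OF Xr] by auto
  have k: "kern X (restr Y {rm_zero Y}) (\<lambda>_. rm_zero Y) = rm_carrier X" unfolding kern_def by simp
  have "strict_quot G X (restr Y {rm_zero Y})"
    unfolding strict_quot_def using XG G_zero[OF Y] hom surj k strict_self[OF XG] by metis
  then show ?thesis using P X unfolding pseudo_torsion_def by blast
qed

lemma lperp_rperp: assumes P: "pseudo_torsion G P" shows "lperp G (rperp G P) = P"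
proof
  show "P \<subseteq> lperp G (rperp G P)"
  proof
    fix X assume X: "X \<in> P"
    have "X \<in> G" using X pt_G[OF P] by blast
    moreover have "f y = rm_zero Y" if "Y \<in> rperp G P" "strict_mor G X Y f" "y \<in> rm_carrier X" for Y f y
      using rperpD[OF that(1) X that(2,3)] .
    ultimately show "X \<in> lperp G (rperp G P)" unfolding lperp_def by blast
  qed
next
  show "lperp G (rperp G P) \<subseteq> P"
  proof
    fix Y assume Yl: "Y \<in> lperp G (rperp G P)"
    have YG: "Y \<in> G" using Yl lperp_G by blast
    have Yr: "rmodule Y" and YL: "Y \<in> modL" using YG G_rmod G_modL by auto
    define F where "F = {T. strict_sub G Y T \<and> restr Y T \<in> P}"
    have "{rm_zero Y} \<in> F" unfolding F_def using strict_zero[OF YG] pt_zero[OF P YG] by blast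
    then have Fne: "F \<noteq> {}" by blast
    have Fsub: "\<And>T. T \<in> F \<Longrightarrow> submodule Y T" unfolding F_def using subobj_sub strict_subobj by blast
    obtain T where T: "T \<in> F" and Tmax: "\<forall>T'\<in>F. T \<subseteq> T' \<longrightarrow> T' = T"
      using noeth_max[OF YL Fne Fsub] by blast
    have TS: "strict_sub G Y T" and TP: "restr Y T \<in> P" using T unfolding F_def by auto
    have subT: "submodule Y T" using Fsub[OF T] .
    have TC: "T \<subseteq> rm_carrier Y" using subobj_C[OF strict_subobj[OF TS]] .
    let ?Z = "quot Y T" and ?p = "qrep Y T"
    have Zr: "rmodule ?Z" using rmodule_quot[OF Yr subT] .
    have ZL: "?Z \<in> modL" using modL_quot[OF YL subT] .
    have p: "rhom Y ?Z ?p" using rhom_qrep[OF Yr subT] .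
    have ps: "?p ` rm_carrier Y = rm_carrier ?Z" using qrep_surj[OF Yr subT] .
    have pk: "kern Y ?Z ?p = T" using kern_qrep[OF Yr subT] .
    have ZG: "?Z \<in> G" using G_quot[OF YG ZL p ps] .
    have pz: "\<And>y. y \<in> rm_carrier Y \<Longrightarrow> ?p y = rm_zero ?Z \<longleftrightarrow> y \<in> T"
      using qrep_zero_iff[OF Yr subT] by simp
    have smp: "strict_mor G Y ?Z ?p"
      unfolding strict_mor_def using YG ZG p pk TS ps strict_self[OF ZG] by simp
    have "?Z \<in> rperp G P"
    proof -
      have "\<forall>x\<in>rm_carrier X. h x = rm_zero ?Z" if X: "X \<in> P" and h: "strict_mor G X ?Z h" for X h
      proof -
        let ?I = "h ` rm_carrier X"
        have IS: "strict_sub G ?Z ?I" using h unfolding strict_mor_def by blast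
        have IC: "?I \<subseteq> rm_carrier ?Z" using subobj_C[OF strict_subobj[OF IS]] .
        have IP: "restr ?Z ?I \<in> P" using pt_img[OF P X h] .
        have IG: "restr ?Z ?I \<in> G" using subobj_G[OF strict_subobj[OF IS]] .
        define I' where "I' = {y \<in> rm_carrier Y. ?p y \<in> ?I}"
        have subI': "submodule Y I'" unfolding I'_def using submodule_preimage[OF Yr Zr p subobj_sub[OF strict_subobj[OF IS]]] .
        have z: "rm_zero ?Z \<in> ?I" using subobj_sub[OF strict_subobj[OF IS]] unfolding submodule_def by blast
        have TI': "T \<subseteq> I'"
        proof
          fix t assume t: "t \<in> T"
          then have tC: "t \<in> rm_carrier Y" using TC by blast
          then have "?p t = rm_zero ?Z" using pz t by blast
          then have "?p t \<in> ?I" using z by simp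
          then show "t \<in> I'" unfolding I'_def using tC by blast
        qed
        have kI': "{x \<in> D. ?p x = rm_zero ?Z} = D \<inter> T" if "D \<subseteq> rm_carrier Y" for D
          using pz that by blast
        have I'C: "I' \<subseteq> rm_carrier Y" unfolding I'_def by blast
        have iI': "?p ` I' = ?I"
        proof
          show "?p ` I' \<subseteq> ?I" unfolding I'_def by blast
          show "?I \<subseteq> ?p ` I'"
          proof
            fix c assume c: "c \<in> ?I"
            then obtain y where "y \<in> rm_carrier Y" "c = ?p y" using IC ps by blast
            then show "c \<in> ?p ` I'" unfolding I'_def using c by blast
          qed
        qed
        have I'G: "restr Y I' \<in> G"
          using G_ext_sub[OF YL ZL p subI'] kI'[OF I'C] TI' subobj_G[OF strict_subobj[OF TS]] iI' IG
          by (simp add: Int_absorb1)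
        have I'S: "strict_sub G Y I'"
        proof -
          have "restr Y (I' \<inter> B') \<in> G" if B': "subobj G Y B'" for B'
          proof -
            have subD: "submodule Y (I' \<inter> B')" using submodule_Int[OF subI' subobj_sub[OF B']] .
            have BC: "B' \<subseteq> rm_carrier Y" using subobj_C[OF B'] .
            have DC: "I' \<inter> B' \<subseteq> rm_carrier Y" using BC by blast
            have "restr ?Z (?p ` B') \<in> G" using G_img[OF subobj_G[OF B'] YL ZL p BC] .
            moreover have "submodule ?Z (?p ` B')" using submodule_image[OF Yr Zr p subobj_sub[OF B']] .
            ultimately have "subobj G ?Z (?p ` B')" unfolding subobj_def by blast
            then have "restr ?Z (?I \<inter> ?p ` B') \<in> G" using strict_Int[OF IS] by blast
            moreover have "?p ` (I' \<inter> B') = ?I \<inter> ?p ` B'"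
            proof
              show "?p ` (I' \<inter> B') \<subseteq> ?I \<inter> ?p ` B'" unfolding I'_def by blast
              show "?I \<inter> ?p ` B' \<subseteq> ?p ` (I' \<inter> B')"
              proof
                fix c assume c: "c \<in> ?I \<inter> ?p ` B'"
                then obtain b where b: "b \<in> B'" "c = ?p b" by blast
                then have "b \<in> I'" unfolding I'_def using BC c by blast
                then show "c \<in> ?p ` (I' \<inter> B')" using b by blast
              qed
            qed
            moreover have "I' \<inter> B' \<inter> T = T \<inter> B'" using TI' by blast
            moreover have "restr Y (T \<inter> B') \<in> G" using strict_Int[OF TS B'] .
            ultimately show ?thesis using G_ext_sub[OF YL ZL p subD] kI'[OF DC] by simp
          qed
          then show ?thesis unfolding strict_sub_def subobj_def using subI' I'G by blast
        qed
        have I'P: "restr Y I' \<in> P"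
        proof -
          have se: "short_exact (restr Y T) id (restr Y I') ?p (restr ?Z ?I)"
            unfolding short_exact_def
          proof (intro conjI)
            show "rhom (restr Y T) (restr Y I') id" unfolding rhom_def using TI' by auto
            show "rhom (restr Y I') (restr ?Z ?I) ?p"
              using rhom_restr_cod[OF rhom_restr_dom[OF p I'C]] iI' by simp
            show "inj_on id (rm_carrier (restr Y T))" by simp
            show "?p ` rm_carrier (restr Y I') = rm_carrier (restr ?Z ?I)" using iI' by simp
            show "id ` rm_carrier (restr Y T) = kern (restr Y I') (restr ?Z ?I) ?p"
              unfolding kern_def using kI'[OF I'C] TI' by auto
          qed
          have "strict_sub G (restr Y I') T" using strict_restr[OF TS strict_subobj[OF I'S] TI'] .
          then have "strict_exact G (restr Y T) id (restr Y I') ?p (restr ?Z ?I)"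
            unfolding strict_exact_def using se subobj_G[OF strict_subobj[OF TS]] I'G IG by simp
          then show ?thesis using P TP IP unfolding pseudo_torsion_def by blast
        qed
        have "I' \<in> F" unfolding F_def using I'S I'P by blast
        then have I'T: "I' = T" using Tmax TI' by blast
        show ?thesis
        proof
          fix x assume x: "x \<in> rm_carrier X"
          have "h x \<in> ?I" using x by blast
          then obtain y where y: "y \<in> rm_carrier Y" "h x = ?p y" using IC ps by blast
          have "h x \<in> ?I" using x by (rule imageI)
          then have "?p y \<in> ?I" using y(2) by simp
          then have "y \<in> I'" unfolding I'_def using y(1) by blast
          then have "y \<in> T" using I'T by simp
          then show "h x = rm_zero ?Z" using pz[OF y(1)] y(2) by simp
        qed
      qed
      then show ?thesis unfolding rperp_def using ZG by blast
    qed
    then have "\<forall>y\<in>rm_carrier Y. ?p y = rm_zero ?Z" using Yl smp unfolding lperp_def by blast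
    then have "rm_carrier Y \<subseteq> T" using pz by blast
    then have "T = rm_carrier Y" using TC by blast
    then show "Y \<in> P" using TP by simp
  qed
qed

end


context tc begin

lemma ptf_G: "pseudo_torsionfree G Q \<Longrightarrow> Q \<subseteq> G" unfolding pseudo_torsionfree_def by blast

lemma lperp_ne: assumes Q: "pseudo_torsionfree G Q" shows "lperp G Q \<noteq> {}"
proof -
  obtain Z where Z: "Z \<in> Q" using Q unfolding pseudo_torsionfree_def by blast
  have ZG: "Z \<in> G" using Z ptf_G[OF Q] by blast
  have Zr: "rmodule Z" using G_rmod[OF ZG] .
  have Z0r: "rmodule (restr Z {rm_zero Z})" using rmodule_restr[OF Zr submodule_zero[OF Zr]] .
  have "restr Z {rm_zero Z} \<in> lperp G Q"
    unfolding lperp_def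
  proof (intro CollectI conjI ballI allI impI)
    show "restr Z {rm_zero Z} \<in> G" using G_zero[OF ZG] .
    fix X0 f y assume X0: "X0 \<in> Q" and f: "strict_mor G (restr Z {rm_zero Z}) X0 f"
      and y: "y \<in> rm_carrier (restr Z {rm_zero Z})"
    have X0r: "rmodule X0" using X0 ptf_G[OF Q] G_rmod by blast
    have "f (rm_zero (restr Z {rm_zero Z})) = rm_zero X0"
      using rhom_zero[OF Z0r X0r] f unfolding strict_mor_def by blast
    then show "f y = rm_zero X0" using y by simp
  qed
  then show ?thesis by blast
qed

lemma lperp_quot: assumes Q: "pseudo_torsionfree G Q" and X: "X \<in> lperp G Q" and q: "strict_quot G X C"
  shows "C \<in> lperp G Q"
proof -
  have XG: "X \<in> G" and CG: "C \<in> G" using q unfolding strict_quot_def by auto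
  obtain g where g: "rhom X C g" and gs: "g ` rm_carrier X = rm_carrier C" and N: "strict_sub G X (kern X C g)"
    using q unfolding strict_quot_def by blast
  have Xr: "rmodule X" and Cr: "rmodule C" using XG CG G_rmod by auto
  have "\<forall>c\<in>rm_carrier C. h c = rm_zero Z" if Z: "Z \<in> Q" and h: "strict_mor G C Z h" for Z h
  proof -
    have ZG: "Z \<in> G" using Z ptf_G[OF Q] by blast
    have hh: "rhom C Z h" and K: "strict_sub G C (kern C Z h)" and Im: "strict_sub G Z (h ` rm_carrier C)"
      using h unfolding strict_mor_def by auto
    have "kern X Z (h \<circ> g) = {x \<in> rm_carrier X. g x \<in> kern C Z h}"
      unfolding kern_def using rhom_closed[OF g] by auto
    then have k: "strict_sub G X (kern X Z (h \<circ> g))" using strict_preimage[OF XG CG g gs N K] by simp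
    have "(h \<circ> g) ` rm_carrier X = h ` (g ` rm_carrier X)" by (rule image_comp[symmetric])
    then have "(h \<circ> g) ` rm_carrier X = h ` rm_carrier C" using gs by simp
    then have sm: "strict_mor G X Z (h \<circ> g)"
      unfolding strict_mor_def using XG ZG rhom_comp[OF g hh] k Im by simp
    show ?thesis
    proof
      fix c assume "c \<in> rm_carrier C"
      then obtain x where x: "x \<in> rm_carrier X" "c = g x" using gs by blast
      show "h c = rm_zero Z" using lperpD[OF X Z sm x(1)] x(2) by simp
    qed
  qed
  then show ?thesis unfolding lperp_def using CG by blast
qed

lemma lperp_ext: assumes Q: "pseudo_torsionfree G Q" and E: "strict_exact G A f B g C"
  and Al: "A \<in> lperp G Q" and Cl: "C \<in> lperp G Q"
  shows "B \<in> lperp G Q"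
proof -
  have AG: "A \<in> G" and BG: "B \<in> G" and CG: "C \<in> G" using E unfolding strict_exact_def by auto
  have Amod: "rmodule A" and Bmod: "rmodule B" and Cmod: "rmodule C" using AG BG CG G_rmod by auto
  have f: "rhom A B f" and g: "rhom B C g" and inj: "inj_on f (rm_carrier A)"
    and gs: "g ` rm_carrier B = rm_carrier C" and fk: "f ` rm_carrier A = kern B C g"
    using E unfolding strict_exact_def short_exact_def by auto
  let ?A' = "f ` rm_carrier A"
  have A'S: "strict_sub G B ?A'" using E unfolding strict_exact_def by auto
  have A'C: "?A' \<subseteq> rm_carrier B" using subobj_C[OF strict_subobj[OF A'S]] .
  have "\<forall>b\<in>rm_carrier B. h b = rm_zero Z" if Z: "Z \<in> Q" and h: "strict_mor G B Z h" for Z h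
  proof -
    have ZG: "Z \<in> G" using Z ptf_G[OF Q] by blast
    have Zr: "rmodule Z" using G_rmod[OF ZG] .
    have hh: "rhom B Z h" and LS: "strict_sub G B (kern B Z h)" and Im: "strict_sub G Z (h ` rm_carrier B)"
      using h unfolding strict_mor_def by auto
    let ?L = "kern B Z h"
    have W: "restr B ?A' \<in> G" using subobj_G[OF strict_subobj[OF A'S]] .
    have fW: "rhom A (restr B ?A') f" using rhom_restr_cod[OF f] by simp
    have LA'S: "strict_sub G (restr B ?A') (?L \<inter> ?A')"
      using strict_restr[OF strict_Int_strict[OF LS A'S] strict_subobj[OF A'S]] by blast
    have "strict_sub G A {a \<in> rm_carrier A. f a \<in> ?L \<inter> ?A'}"
      using strict_pull[OF AG W fW inj _ LA'S] by simp
    moreover have "kern A Z (h \<circ> f) = {a \<in> rm_carrier A. f a \<in> ?L \<inter> ?A'}"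
      unfolding kern_def using rhom_closed[OF f] by auto
    ultimately have k1: "strict_sub G A (kern A Z (h \<circ> f))" by simp
    have "(h \<circ> f) ` rm_carrier A = h ` ?A'" by (rule image_comp[symmetric])
    then have i1: "strict_sub G Z ((h \<circ> f) ` rm_carrier A)" using strict_img_mor[OF h A'S] by simp
    have sm1: "strict_mor G A Z (h \<circ> f)"
      unfolding strict_mor_def using AG ZG rhom_comp[OF f hh] k1 i1 by simp
    have A'L: "?A' \<subseteq> ?L"
    proof
      fix b assume "b \<in> ?A'"
      then obtain a where a: "a \<in> rm_carrier A" "b = f a" by blast
      have "(h \<circ> f) a = rm_zero Z" using lperpD[OF Al Z sm1 a(1)] .
      then show "b \<in> ?L" unfolding kern_def using a rhom_closed[OF f a(1)] by simp
    qed
    \<comment> \<open>Step 2: h factors through C\<close>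
    define hb where "hb = (\<lambda>c. h (inv_into (rm_carrier B) g c))"
    have kk: "\<And>b. b \<in> rm_carrier B \<Longrightarrow> g b = rm_zero C \<Longrightarrow> h b = rm_zero Z"
    proof -
      fix b assume "b \<in> rm_carrier B" "g b = rm_zero C"
      then have "b \<in> ?L" using A'L fk unfolding kern_def by blast
      then show "h b = rm_zero Z" unfolding kern_def by blast
    qed
    have hbh: "rhom C Z hb" unfolding hb_def using factor_hom(1)[OF Bmod Cmod Zr g gs hh kk] .
    have hbg: "\<And>b. b \<in> rm_carrier B \<Longrightarrow> hb (g b) = h b" unfolding hb_def using factor_hom(2)[OF Bmod Cmod Zr g gs hh kk] .
    have kb: "kern C Z hb = g ` ?L"
    proof (rule set_eqI)
      fix c show "c \<in> kern C Z hb \<longleftrightarrow> c \<in> g ` ?L"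
      proof
        assume "c \<in> kern C Z hb"
        then have c: "c \<in> rm_carrier C" "hb c = rm_zero Z" unfolding kern_def by auto
        then obtain b where b: "b \<in> rm_carrier B" "c = g b" using gs by blast
        then have "h b = rm_zero Z" using hbg c by simp
        then have "b \<in> ?L" unfolding kern_def using b by blast
        then show "c \<in> g ` ?L" using b by blast
      next
        assume "c \<in> g ` ?L"
        then obtain b where b: "b \<in> ?L" "c = g b" by blast
        then have bC: "b \<in> rm_carrier B" "h b = rm_zero Z" unfolding kern_def by auto
        then show "c \<in> kern C Z hb" unfolding kern_def using b hbg rhom_closed[OF g bC(1)] by simp
      qed
    qed
    have ib: "hb ` rm_carrier C = h ` rm_carrier B"
    proof
      show "hb ` rm_carrier C \<subseteq> h ` rm_carrier B"
      proof
        fix z assume "z \<in> hb ` rm_carrier C"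
        then obtain c where c: "c \<in> rm_carrier C" "z = hb c" by blast
        then obtain b where b: "b \<in> rm_carrier B" "c = g b" using gs by blast
        then show "z \<in> h ` rm_carrier B" using c hbg by simp
      qed
      show "h ` rm_carrier B \<subseteq> hb ` rm_carrier C"
      proof
        fix z assume "z \<in> h ` rm_carrier B"
        then obtain b where b: "b \<in> rm_carrier B" "z = h b" by blast
        then have "z = hb (g b)" using hbg by simp
        moreover have "g b \<in> rm_carrier C" using rhom_closed[OF g b(1)] .
        ultimately show "z \<in> hb ` rm_carrier C" by blast
      qed
    qed
    have gk: "restr B (kern B C g) \<in> G" using W fk by simp
    have "strict_sub G C (g ` ?L)" using strict_push[OF BG CG g gs gk LS] .
    then have sm2: "strict_mor G C Z hb"
      unfolding strict_mor_def using CG ZG hbh kb ib Im by simp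
    show ?thesis
    proof
      fix b assume b: "b \<in> rm_carrier B"
      have "hb (g b) = rm_zero Z" using lperpD[OF Cl Z sm2 rhom_closed[OF g b]] .
      then show "h b = rm_zero Z" using hbg[OF b] by simp
    qed
  qed
  then show ?thesis unfolding lperp_def using BG by blast
qed

lemma lperp_pt: assumes Q: "pseudo_torsionfree G Q" shows "pseudo_torsion G (lperp G Q)"
  unfolding pseudo_torsion_def
  using lperp_ne[OF Q] lperp_G lperp_quot[OF Q] lperp_ext[OF Q] by blast

end


context tc begin

lemma ptf_zero: assumes Q: "pseudo_torsionfree G Q" and Z: "Z \<in> Q" shows "restr Z {rm_zero Z} \<in> Q"
proof -
  have "Z \<in> G" using Z ptf_G[OF Q] by blast
  then show ?thesis using Q Z strict_zero unfolding pseudo_torsionfree_def by blast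
qed

lemma Q_iso: assumes Q: "pseudo_torsionfree G Q" and C: "C \<in> Q" and B: "B \<in> G"
  and phi: "rhom B C \<phi>" and bij: "bij_betw \<phi> (rm_carrier B) (rm_carrier C)"
  shows "B \<in> Q"
proof -
  have CG: "C \<in> G" using C ptf_G[OF Q] by blast
  have Br: "rmodule B" and Cr: "rmodule C" using B CG G_rmod by auto
  have inj: "inj_on \<phi> (rm_carrier B)" and surj: "\<phi> ` rm_carrier B = rm_carrier C"
    using bij unfolding bij_betw_def by auto
  let ?A = "restr C {rm_zero C}"
  have AQ: "?A \<in> Q" using ptf_zero[OF Q C] .
  have AG: "?A \<in> G" using G_zero[OF CG] .
  have se: "short_exact ?A (\<lambda>_. rm_zero B) B \<phi> C"
    unfolding short_exact_def
  proof (intro conjI)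
    show "rhom ?A B (\<lambda>_. rm_zero B)" unfolding rhom_def using Br by simp
    show "rhom B C \<phi>" by (rule phi)
    show "inj_on (\<lambda>_. rm_zero B) (rm_carrier ?A)" by simp
    show "\<phi> ` rm_carrier B = rm_carrier C" by (rule surj)
    show "(\<lambda>_. rm_zero B) ` rm_carrier ?A = kern B C \<phi>" using kern_inj[OF Br Cr phi inj] by simp
  qed
  have "strict_exact G ?A (\<lambda>_. rm_zero B) B \<phi> C"
    unfolding strict_exact_def using AG B CG se strict_zero[OF B] by simp
  then show ?thesis using Q AQ C unfolding pseudo_torsionfree_def by blast
qed

lemma rperp_lperp: assumes Q: "pseudo_torsionfree G Q" shows "rperp G (lperp G Q) = Q"
proof
  show "Q \<subseteq> rperp G (lperp G Q)"
  proof
    fix Y assume Y: "Y \<in> Q"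
    have "Y \<in> G" using Y ptf_G[OF Q] by blast
    moreover have "f x = rm_zero Y" if "X \<in> lperp G Q" "strict_mor G X Y f" "x \<in> rm_carrier X" for X f x
      using lperpD[OF that(1) Y that(2,3)] .
    ultimately show "Y \<in> rperp G (lperp G Q)" unfolding rperp_def by blast
  qed
next
  show "rperp G (lperp G Q) \<subseteq> Q"
  proof
    fix Y assume Yr: "Y \<in> rperp G (lperp G Q)"
    have YG: "Y \<in> G" using Yr rperp_G by blast
    have Ym: "rmodule Y" and YL: "Y \<in> modL" using YG G_rmod G_modL by auto
    define F where "F = {K. strict_sub G Y K \<and> quot Y K \<in> Q}"
    obtain Z where Z: "Z \<in> Q" using Q unfolding pseudo_torsionfree_def by blast
    have ZG: "Z \<in> G" using Z ptf_G[OF Q] by blast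
    have quotG: "quot Y K \<in> G" if "submodule Y K" for K
      using G_quot[OF YG modL_quot[OF YL that] rhom_qrep[OF Ym that] qrep_surj[OF Ym that]] .
    have "rm_carrier Y \<in> F"
    proof -
      let ?C = "rm_carrier Y"
      have subC: "submodule Y ?C" using submodule_carrier[OF Ym] .
      let ?phi = "\<lambda>_::'l list. rm_zero Z"
      have Zm: "rmodule Z" using G_rmod[OF ZG] .
      have qc: "rm_carrier (quot Y ?C) = {qrep Y ?C (rm_zero Y)}"
      proof -
        have "qrep Y ?C y = qrep Y ?C (rm_zero Y)" if "y \<in> ?C" for y
          using qrep_zero_iff[OF Ym subC that] that by simp
        note e = this
        show ?thesis
        proof (rule set_eqI)
          fix c show "c \<in> rm_carrier (quot Y ?C) \<longleftrightarrow> c \<in> {qrep Y ?C (rm_zero Y)}"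
          proof
            assume "c \<in> rm_carrier (quot Y ?C)"
            then obtain y where y: "y \<in> ?C" "c = qrep Y ?C y" by auto
            then show "c \<in> {qrep Y ?C (rm_zero Y)}" using e[OF y(1)] by simp
          next
            assume "c \<in> {qrep Y ?C (rm_zero Y)}"
            then have "c = qrep Y ?C (rm_zero Y)" by simp
            then show "c \<in> rm_carrier (quot Y ?C)" using zero_closed[OF Ym] by simp
          qed
        qed
      qed
      have "rhom (quot Y ?C) (restr Z {rm_zero Z}) ?phi" unfolding rhom_def using Zm by simp
      moreover have "bij_betw ?phi (rm_carrier (quot Y ?C)) (rm_carrier (restr Z {rm_zero Z}))"
        unfolding bij_betw_def using qc by simp
      ultimately have "quot Y ?C \<in> Q" using Q_iso[OF Q ptf_zero[OF Q Z] quotG[OF subC]] by blast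
      then show ?thesis unfolding F_def using strict_self[OF YG] by blast
    qed
    then have Fne: "F \<noteq> {}" by blast
    have Fsub: "\<And>K. K \<in> F \<Longrightarrow> submodule Y K" unfolding F_def using subobj_sub strict_subobj by blast
    obtain K where K: "K \<in> F" and Kmin: "\<forall>K'\<in>F. K' \<subseteq> K \<longrightarrow> K' = K"
      using noeth_min[OF YL Fne Fsub] by blast
    have KS: "strict_sub G Y K" and KQ: "quot Y K \<in> Q" using K unfolding F_def by auto
    have subK: "submodule Y K" using Fsub[OF K] .
    have KC: "K \<subseteq> rm_carrier Y" using subobj_C[OF strict_subobj[OF KS]] .
    let ?Kr = "restr Y K"
    have KrG: "?Kr \<in> G" using subobj_G[OF strict_subobj[OF KS]] .
    have Krm: "rmodule ?Kr" using rmodule_restr[OF Ym subK] .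
    have KrL: "?Kr \<in> modL" using G_modL[OF KrG] .
    have Kl: "?Kr \<in> lperp G Q"
    proof -
      have "\<forall>k\<in>K. h k = rm_zero W" if W: "W \<in> Q" and h: "strict_mor G ?Kr W h" for W h
      proof -
        have WG: "W \<in> G" using W ptf_G[OF Q] by blast
        have Wm: "rmodule W" and WL: "W \<in> modL" using WG G_rmod G_modL by auto
        have hh: "rhom ?Kr W h" and LS: "strict_sub G ?Kr (kern ?Kr W h)" and IS: "strict_sub G W (h ` K)"
          using h unfolding strict_mor_def by auto
        define L where "L = kern ?Kr W h"
        have LK: "L \<subseteq> K" unfolding L_def kern_def by auto
        have LSY: "strict_sub G Y L" unfolding L_def using strict_trans[OF LS KS] .
        have subL: "submodule Y L" using subobj_sub[OF strict_subobj[OF LSY]] .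
        have LG: "restr Y L \<in> G" using subobj_G[OF strict_subobj[OF LSY]] .
        let ?pL = "qrep Y L" and ?pK = "qrep Y K"
        have pL: "rhom Y (quot Y L) ?pL" using rhom_qrep[OF Ym subL] .
        have pK: "rhom Y (quot Y K) ?pK" using rhom_qrep[OF Ym subK] .
        have pLs: "?pL ` rm_carrier Y = rm_carrier (quot Y L)" using qrep_surj[OF Ym subL] .
        have pKs: "?pK ` rm_carrier Y = rm_carrier (quot Y K)" using qrep_surj[OF Ym subK] .
        have qLm: "rmodule (quot Y L)" using rmodule_quot[OF Ym subL] .
        have qKm: "rmodule (quot Y K)" using rmodule_quot[OF Ym subK] .
        have pLz: "\<And>y. y \<in> rm_carrier Y \<Longrightarrow> ?pL y = rm_zero (quot Y L) \<longleftrightarrow> y \<in> L"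
          using qrep_zero_iff[OF Ym subL] by simp
        have pKz: "\<And>y. y \<in> rm_carrier Y \<Longrightarrow> ?pK y = rm_zero (quot Y K) \<longleftrightarrow> y \<in> K"
          using qrep_zero_iff[OF Ym subK] by simp
        define gm where "gm = (\<lambda>c. ?pK (inv_into (rm_carrier Y) ?pL c))"
        have kk1: "\<And>y. y \<in> rm_carrier Y \<Longrightarrow> ?pL y = rm_zero (quot Y L) \<Longrightarrow> ?pK y = rm_zero (quot Y K)"
          using pLz pKz LK by blast
        have gmh: "rhom (quot Y L) (quot Y K) gm" unfolding gm_def using factor_hom(1)[OF Ym qLm qKm pL pLs pK kk1] .
        have gmp: "\<And>y. y \<in> rm_carrier Y \<Longrightarrow> gm (?pL y) = ?pK y" unfolding gm_def using factor_hom(2)[OF Ym qLm qKm pL pLs pK kk1] .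
        let ?I = "h ` K"
        have subI: "submodule W ?I" using subobj_sub[OF strict_subobj[OF IS]] .
        have Im: "rmodule (restr W ?I)" using rmodule_restr[OF Wm subI] .
        have hI: "rhom ?Kr (restr W ?I) h" using rhom_restr_cod[OF hh] by simp
        have hIs: "h ` rm_carrier ?Kr = rm_carrier (restr W ?I)" by simp
        have pLK: "rhom ?Kr (quot Y L) ?pL" using rhom_restr_dom[OF pL KC] .
        define fm where "fm = (\<lambda>z. ?pL (inv_into (rm_carrier ?Kr) h z))"
        have kk2: "\<And>k. k \<in> rm_carrier ?Kr \<Longrightarrow> h k = rm_zero (restr W ?I) \<Longrightarrow> ?pL k = rm_zero (quot Y L)"
        proof -
          fix k assume k: "k \<in> rm_carrier ?Kr" "h k = rm_zero (restr W ?I)"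
          then have "k \<in> L" unfolding L_def kern_def by simp
          then show "?pL k = rm_zero (quot Y L)" using pLz KC k by auto
        qed
        have fmh: "rhom (restr W ?I) (quot Y L) fm" unfolding fm_def using factor_hom(1)[OF Krm Im qLm hI hIs pLK kk2] .
        have fmp: "\<And>k. k \<in> K \<Longrightarrow> fm (h k) = ?pL k" unfolding fm_def using factor_hom(2)[OF Krm Im qLm hI hIs pLK kk2] by simp
        have fminj: "inj_on fm ?I"
        proof (rule inj_onI)
          fix z z' assume z: "z \<in> ?I" "z' \<in> ?I" "fm z = fm z'"
          then obtain k k' where k: "k \<in> K" "z = h k" "k' \<in> K" "z' = h k'" by blast
          then have "?pL k = ?pL k'" using fmp z(3) by simp
          then have "rm_add ?Kr k (mneg ?Kr k') \<in> kern ?Kr (quot Y L) ?pL"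
            using rhom_eq_kern[OF Krm qLm pLK] k by simp
          moreover have "kern ?Kr (quot Y L) ?pL \<subseteq> kern ?Kr W h"
          proof
            fix x assume "x \<in> kern ?Kr (quot Y L) ?pL"
            then have "x \<in> K" "?pL x = rm_zero (quot Y L)" unfolding kern_def by auto
            then have "x \<in> L" using pLz KC by blast
            then show "x \<in> kern ?Kr W h" unfolding L_def .
          qed
          ultimately have "rm_add ?Kr k (mneg ?Kr k') \<in> kern ?Kr W h" by blast
          then have "h k = h k'" using rhom_eq[OF Krm Wm hh] k by simp
          then show "z = z'" using k by simp
        qed
        have fmimg: "fm ` ?I = ?pL ` K"
        proof
          show "fm ` ?I \<subseteq> ?pL ` K" using fmp by auto
          show "?pL ` K \<subseteq> fm ` ?I"
          proof
            fix c assume "c \<in> ?pL ` K"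
            then obtain k where k: "k \<in> K" "c = ?pL k" by blast
            then have "c = fm (h k)" using fmp by simp
            then show "c \<in> fm ` ?I" using k(1) by blast
          qed
        qed
        have kgm: "kern (quot Y L) (quot Y K) gm = ?pL ` K"
        proof (rule set_eqI)
          fix c show "c \<in> kern (quot Y L) (quot Y K) gm \<longleftrightarrow> c \<in> ?pL ` K"
          proof
            assume "c \<in> kern (quot Y L) (quot Y K) gm"
            then have c: "c \<in> rm_carrier (quot Y L)" "gm c = rm_zero (quot Y K)" unfolding kern_def by auto
            then obtain y where y: "y \<in> rm_carrier Y" "c = ?pL y" using pLs by blast
            then have "?pK y = rm_zero (quot Y K)" using gmp c by simp
            then have "y \<in> K" using pKz y by blast
            then show "c \<in> ?pL ` K" using y by blast
          next
            assume "c \<in> ?pL ` K"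
            then obtain y where y: "y \<in> K" "c = ?pL y" by blast
            have yC: "y \<in> rm_carrier Y" using y KC by blast
            have "gm c = rm_zero (quot Y K)" using gmp[OF yC] pKz[OF yC] y by simp
            moreover have "c \<in> rm_carrier (quot Y L)" using pLs yC y by blast
            ultimately show "c \<in> kern (quot Y L) (quot Y K) gm" unfolding kern_def by blast
          qed
        qed
        have gms: "gm ` rm_carrier (quot Y L) = rm_carrier (quot Y K)"
        proof
          show "gm ` rm_carrier (quot Y L) \<subseteq> rm_carrier (quot Y K)" using rhom_closed[OF gmh] by blast
          show "rm_carrier (quot Y K) \<subseteq> gm ` rm_carrier (quot Y L)"
          proof
            fix c assume "c \<in> rm_carrier (quot Y K)"
            then obtain y where y: "y \<in> rm_carrier Y" "c = ?pK y" using pKs by blast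
            then have "c = gm (?pL y)" using gmp by simp
            moreover have "?pL y \<in> rm_carrier (quot Y L)" using pLs y by blast
            ultimately show "c \<in> gm ` rm_carrier (quot Y L)" by blast
          qed
        qed
        have qLG: "quot Y L \<in> G" using quotG[OF subL] .
        have qKG: "quot Y K \<in> G" using quotG[OF subK] .
        have IQ: "restr W ?I \<in> Q" using Q W IS unfolding pseudo_torsionfree_def by blast
        have IG: "restr W ?I \<in> G" using subobj_G[OF strict_subobj[OF IS]] .
        have pLker: "restr Y (kern Y (quot Y L) ?pL) \<in> G" using kern_qrep[OF Ym subL] LG by simp
        have sK: "strict_sub G (quot Y L) (?pL ` K)" using strict_push[OF YG qLG pL pLs pLker KS] .
        have se: "short_exact (restr W ?I) fm (quot Y L) gm (quot Y K)"
          unfolding short_exact_def using fmh gmh fminj gms fmimg kgm by simp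
        have "strict_exact G (restr W ?I) fm (quot Y L) gm (quot Y K)"
          unfolding strict_exact_def using IG qLG qKG se sK fmimg by simp
        then have "quot Y L \<in> Q" using Q IQ KQ unfolding pseudo_torsionfree_def by blast
        then have "L \<in> F" unfolding F_def using LSY by blast
        then have LeK: "L = K" using Kmin LK by blast
        show ?thesis
        proof
          fix k assume "k \<in> K"
          then have "k \<in> L" using LeK by simp
          then show "h k = rm_zero W" unfolding L_def kern_def by simp
        qed
      qed
      then show ?thesis unfolding lperp_def using KrG by simp
    qed
    \<comment> \<open>The inclusion K -> Y is a strict morphism, hence zero\<close>
    have incl: "strict_mor G ?Kr Y id"
      unfolding strict_mor_def
    proof (intro conjI)
      show "?Kr \<in> G" by (rule KrG)
      show "Y \<in> G" by (rule YG)
      show "rhom ?Kr Y id" using rhom_id[OF subK] .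
      have z: "rm_zero Y \<in> K" using subK unfolding submodule_def by blast
      have "kern ?Kr Y id = {rm_zero ?Kr}" unfolding kern_def using z by auto
      then show "strict_sub G ?Kr (kern ?Kr Y id)" using strict_zero[OF KrG] by simp
      show "strict_sub G Y (id ` rm_carrier ?Kr)" using KS by simp
    qed
    have K0: "K \<subseteq> {rm_zero Y}"
    proof
      fix k assume k: "k \<in> K"
      have "id k = rm_zero Y" using rperpD[OF Yr Kl incl] k by simp
      then show "k \<in> {rm_zero Y}" by simp
    qed
    have sub0: "submodule Y {rm_zero Y}" using submodule_zero[OF Ym] .
    have Keq: "K = {rm_zero Y}" using K0 subK unfolding submodule_def by blast
    have p0: "rhom Y (quot Y {rm_zero Y}) (qrep Y {rm_zero Y})" using rhom_qrep[OF Ym sub0] .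
    have "kern Y (quot Y {rm_zero Y}) (qrep Y {rm_zero Y}) = {rm_zero Y}" using kern_qrep[OF Ym sub0] .
    then have "inj_on (qrep Y {rm_zero Y}) (rm_carrier Y)"
      using inj_kern[OF Ym rmodule_quot[OF Ym sub0] p0] by simp
    then have "bij_betw (qrep Y {rm_zero Y}) (rm_carrier Y) (rm_carrier (quot Y {rm_zero Y}))"
      unfolding bij_betw_def using qrep_surj[OF Ym sub0] by simp
    then show "Y \<in> Q" using Q_iso[OF Q _ YG p0] KQ Keq by simp
  qed
qed

end


theorem mainTheorem8:
  fixes sc :: "'k::field \<Rightarrow> 'l::ring_1 \<Rightarrow> 'l"
    and G :: "'l modl set"
  assumes "fd_algebra sc"
    and "torsion_class G"
  shows "(\<forall>P. pseudo_torsion G P \<longrightarrow>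
            pseudo_torsionfree G (rperp G P) \<and> lperp G (rperp G P) = P) \<and>
         (\<forall>Q. pseudo_torsionfree G Q \<longrightarrow>
            pseudo_torsion G (lperp G Q) \<and> rperp G (lperp G Q) = Q) \<and>
         bij_betw (rperp G) {P. pseudo_torsion G P} {Q. pseudo_torsionfree G Q} \<and>
         (\<forall>Q. pseudo_torsionfree G Q \<longrightarrow> lperp G Q = inv_into {P. pseudo_torsion G P} (rperp G) Q)"
proof -
  interpret T: tc sc G using assms unfolding tc_def tc_axioms_def fda_def by simp
  have one: "\<forall>P. pseudo_torsion G P \<longrightarrow> pseudo_torsionfree G (rperp G P) \<and> lperp G (rperp G P) = P"
    using T.rperp_ptf T.lperp_rperp by blast
  have two: "\<forall>Q. pseudo_torsionfree G Q \<longrightarrow> pseudo_torsion G (lperp G Q) \<and> rperp G (lperp G Q) = Q"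
    using T.lperp_pt T.rperp_lperp by blast
  have inj: "inj_on (rperp G) {P. pseudo_torsion G P}"
  proof (rule inj_onI)
    fix P1 P2 assume "P1 \<in> {P. pseudo_torsion G P}" "P2 \<in> {P. pseudo_torsion G P}" "rperp G P1 = rperp G P2"
    then show "P1 = P2" using one by (metis mem_Collect_eq)
  qed
  have img: "rperp G ` {P. pseudo_torsion G P} = {Q. pseudo_torsionfree G Q}"
  proof
    show "rperp G ` {P. pseudo_torsion G P} \<subseteq> {Q. pseudo_torsionfree G Q}" using one by blast
    show "{Q. pseudo_torsionfree G Q} \<subseteq> rperp G ` {P. pseudo_torsion G P}"
    proof
      fix Q assume "Q \<in> {Q. pseudo_torsionfree G Q}"
      then have Q: "pseudo_torsionfree G Q" by simp
      then have "Q = rperp G (lperp G Q)" "lperp G Q \<in> {P. pseudo_torsion G P}" using two by auto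
      then show "Q \<in> rperp G ` {P. pseudo_torsion G P}" by (metis imageI)
    qed
  qed
  have four: "\<forall>Q. pseudo_torsionfree G Q \<longrightarrow> lperp G Q = inv_into {P. pseudo_torsion G P} (rperp G) Q"
  proof (intro allI impI)
    fix Q assume Q: "pseudo_torsionfree G Q"
    then have e: "rperp G (lperp G Q) = Q" and m: "lperp G Q \<in> {P. pseudo_torsion G P}" using two by auto
    have "inv_into {P. pseudo_torsion G P} (rperp G) (rperp G (lperp G Q)) = lperp G Q"
      by (rule inv_into_f_f[OF inj m])
    then show "lperp G Q = inv_into {P. pseudo_torsion G P} (rperp G) Q" using e by simp
  qed
  show ?thesis using one two inj img four unfolding bij_betw_def by blast
qed

end
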